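(* Let $K=\mathbb{Z}/3$, let $G$ be a simple graph with edges $e_1,\dots,e_s$ ($s\ge1$), and let $d\ge0$. With $\mathcal{B}_d$ and $\mathcal{J}_d$ as in the context, the map $\mathcal{B}_d\to\mathcal{J}_d$, $t^\gamma\mapsto\{e_i: i\in\operatorname{supp}(\gamma)\}$, is well defined and a bijection. In particular, $$\dim_K C_X(d)=\sum_{i\ge0}|\mathcal{J}_{d-2i}|.$$
   Context: Let $G$ be a simple graph with vertex set $\{1,\dots,n\}$ and a fixed ordering $e_1,\dots,e_s$ of its edges; edge $e_k$ is identified with the variable $t_k$ of $S=K[t_1,\dots,t_s]$, $K$ a finite field. Let $X\subseteq\mathbb{P}^{s-1}$ be the image of the projective torus $\{(x_1:\dots:x_n): x_i\neq0\}\subseteq\mathbb{P}^{n-1}$ under the map whose $k$-th coordinate is $x_ix_j$ when $e_k=\{i,j\}$. Order $X=\{P_1,\dots,P_m\}$. For $d\ge0$, $C_X(d)\subseteq K^m$ is the image of $S_d$ under $f\mapsto \big(f(P_1)/t_1^d(P_1),\dots,f(P_m)/t_1^d(P_m)\big)$. $I(X)$ is the ideal generated by homogeneous polynomials vanishing on $X$. For $\gamma\in\mathbb{N}^s$, $t^\gamma=t_1^{\gamma_1}\cdots t_s^{\gamma_s}$. $\mathcal{B}_d$ is the set of monomials of degree $d$ not divisible by the leading term, in graded reverse lexicographic order with $t_1>\dots>t_s$, of any polynomial in $(I(X),t_s^2)$; $\mathcal{B}_d=\emptyset$ for $d<0$. An Eulerian subgraph of $G$ is a subgraph in which every vertex has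 even degree; its last edge is its edge $e_i$ of largest index $i$. A set $J\subseteq E_G$ is a parity join if $|J\cap E_C|\le |E_C|/2$ for every Eulerian subgraph $C\subseteq G$ with an even number of edges. For $d\ge0$, $\mathcal{J}_d$ is the set of parity joins $J$ with $|J|=d$ such that $J$ contains the last edge of every Eulerian subgraph $C$ (with an even number of edges) for which $|J\cap E_C|=|E_C|/2$; $\mathcal{J}_d=\emptyset$ for $d<0$. *)

theory Defs
  imports "Berlekamp_Zassenhaus.Finite_Field" "HOL-Library.Poly_Mapping" "HOL-Library.Function_Algebras"
begin

datatype three = T0 | T1 | T2

lemma UNIV_three: "(UNIV :: three set) = {T0, T1, T2}"
  using three.exhaust by auto

instance three :: finite
  by standard (simp add: UNIV_three)

lemma card_three: "CARD(three) = 3"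
  by (simp add: UNIV_three)

instance three :: prime_card
  by standard (simp add: card_three)

type_synonym K = "three mod_ring"

type_synonym mon = "nat \<Rightarrow>\<^sub>0 nat"          \<comment> \<open>exponent vector gamma; t^gamma\<close>
type_synonym pol = "mon \<Rightarrow>\<^sub>0 K"

definition mdeg :: "mon \<Rightarrow> nat" where
  "mdeg \<gamma> = (\<Sum>k\<in>Poly_Mapping.keys \<gamma>. Poly_Mapping.lookup \<gamma> k)"

definition tvar :: "nat \<Rightarrow> pol" where
  "tvar k = Poly_Mapping.single (Poly_Mapping.single k 1) 1"

definition inS :: "nat \<Rightarrow> pol \<Rightarrow> bool" where
  "inS s f \<longleftrightarrow> (\<forall>\<gamma>\<in>Poly_Mapping.keys f. Poly_Mapping.keys \<gamma> \<subseteq> {1..s})"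

definition homog :: "nat \<Rightarrow> pol \<Rightarrow> bool" where
  "homog d f \<longleftrightarrow> (\<forall>\<gamma>\<in>Poly_Mapping.keys f. mdeg \<gamma> = d)"

definition peval :: "pol \<Rightarrow> (nat \<Rightarrow> K) \<Rightarrow> K" where
  "peval f v = (\<Sum>\<gamma>\<in>Poly_Mapping.keys f. Poly_Mapping.lookup f \<gamma> * (\<Prod>k\<in>Poly_Mapping.keys \<gamma>. v k ^ Poly_Mapping.lookup \<gamma> k))"

definition ideal_gen :: "nat \<Rightarrow> pol set \<Rightarrow> pol set" where
  "ideal_gen s G = {f. \<exists>F a. finite F \<and> F \<subseteq> G \<and> (\<forall>g\<in>F. inS s (a g)) \<and> f = (\<Sum>g\<in>F. a g * g)}"

text \<open>Graded reverse lexicographic order with t_1 > ... > t_s: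
  grevlex_less b a  means  t^b < t^a.\<close>
definition grevlex_less :: "mon \<Rightarrow> mon \<Rightarrow> bool" where
  "grevlex_less \<beta> \<alpha> \<longleftrightarrow> mdeg \<beta> < mdeg \<alpha> \<or>
     (mdeg \<beta> = mdeg \<alpha> \<and> \<beta> \<noteq> \<alpha> \<and>
       (let k = Max {i. Poly_Mapping.lookup \<alpha> i \<noteq> Poly_Mapping.lookup \<beta> i} in Poly_Mapping.lookup \<alpha> k < Poly_Mapping.lookup \<beta> k))"

definition is_lead_mon :: "pol \<Rightarrow> mon \<Rightarrow> bool" where
  "is_lead_mon f \<mu> \<longleftrightarrow> \<mu> \<in> Poly_Mapping.keys f \<and> (\<forall>\<beta>\<in>Poly_Mapping.keys f. \<beta> \<noteq> \<mu> \<longrightarrow> grevlex_less \<beta> \<mu>)"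

definition mdvd :: "mon \<Rightarrow> mon \<Rightarrow> bool" where
  "mdvd \<mu> \<gamma> \<longleftrightarrow> (\<forall>k. Poly_Mapping.lookup \<mu> k \<le> Poly_Mapping.lookup \<gamma> k)"

text \<open>Graph on vertices {1..n}, edge e_k = E k for k in {1..s}.
  Points of P^{s-1} are represented by vectors v :: nat => K (coordinates 1..s),
  and a projective point is the class of nonzero scalar multiples.\<close>

definition pclass :: "(nat \<Rightarrow> K) \<Rightarrow> (nat \<Rightarrow> K) set" where
  "pclass v = {(\<lambda>k. c * v k) | c. c \<noteq> 0}"

definition torus_image :: "(nat \<Rightarrow> nat set) \<Rightarrow> nat \<Rightarrow> (nat \<Rightarrow> K) \<Rightarrow> (nat \<Rightarrow> K)" where
  "torus_image E s x = (\<lambda>k. if k \<in> {1..s} then (\<Prod>i\<in>E k. x i) else 0)"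

definition Xset :: "(nat \<Rightarrow> nat set) \<Rightarrow> nat \<Rightarrow> nat \<Rightarrow> (nat \<Rightarrow> K) set set" where
  "Xset E n s = {pclass (torus_image E s x) | x. \<forall>i\<in>{1..n}. x i \<noteq> 0}"

definition IX :: "(nat \<Rightarrow> nat set) \<Rightarrow> nat \<Rightarrow> nat \<Rightarrow> pol set" where
  "IX E n s = ideal_gen s {f. inS s f \<and> (\<exists>d. homog d f) \<and>
       (\<forall>P\<in>Xset E n s. \<forall>v\<in>P. peval f v = 0)}"

definition Bset :: "(nat \<Rightarrow> nat set) \<Rightarrow> nat \<Rightarrow> nat \<Rightarrow> nat \<Rightarrow> mon set" where
  "Bset E n s d = {\<gamma>. Poly_Mapping.keys \<gamma> \<subseteq> {1..s} \<and> mdeg \<gamma> = d \<and>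
     \<not> (\<exists>f\<in>ideal_gen s (IX E n s \<union> {tvar s ^ 2}). f \<noteq> 0 \<and>
          (\<exists>\<mu>. is_lead_mon f \<mu> \<and> mdvd \<mu> \<gamma>))}"

text \<open>The code C_X(d), as a subspace of K^X (functions X -> K, zero off X);
  a codeword is P |-> f(P)/t_1^d(P), computed at any representative of P.\<close>
definition codeword :: "(nat \<Rightarrow> nat set) \<Rightarrow> nat \<Rightarrow> nat \<Rightarrow> nat \<Rightarrow> pol \<Rightarrow> (nat \<Rightarrow> K) set \<Rightarrow> K" where
  "codeword E n s d f = (\<lambda>P. if P \<in> Xset E n s
       then peval f (SOME v. v \<in> P) / ((SOME v. v \<in> P) 1) ^ d else 0)"

definition CX :: "(nat \<Rightarrow> nat set) \<Rightarrow> nat \<Rightarrow> nat \<Rightarrow> nat \<Rightarrow> ((nat \<Rightarrow> K) set \<Rightarrow> K) set" where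
  "CX E n s d = codeword E n s d ` {f. inS s f \<and> homog d f}"

definition fscale :: "K \<Rightarrow> ((nat \<Rightarrow> K) set \<Rightarrow> K) \<Rightarrow> ((nat \<Rightarrow> K) set \<Rightarrow> K)" where
  "fscale c w = (\<lambda>P. c * w P)"

definition edges :: "(nat \<Rightarrow> nat set) \<Rightarrow> nat \<Rightarrow> nat set set" where
  "edges E s = E ` {1..s}"

definition eulerian :: "(nat \<Rightarrow> nat set) \<Rightarrow> nat \<Rightarrow> nat set set \<Rightarrow> bool" where
  "eulerian E s C \<longleftrightarrow> C \<subseteq> edges E s \<and> C \<noteq> {} \<and> (\<forall>v. even (card {e\<in>C. v \<in> e}))"

definition last_edge :: "(nat \<Rightarrow> nat set) \<Rightarrow> nat \<Rightarrow> nat set set \<Rightarrow> nat set" where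
  "last_edge E s C = E (Max {k\<in>{1..s}. E k \<in> C})"

definition parity_join :: "(nat \<Rightarrow> nat set) \<Rightarrow> nat \<Rightarrow> nat set set \<Rightarrow> bool" where
  "parity_join E s J \<longleftrightarrow> J \<subseteq> edges E s \<and>
     (\<forall>C. eulerian E s C \<and> even (card C) \<longrightarrow> 2 * card (J \<inter> C) \<le> card C)"

definition Jset :: "(nat \<Rightarrow> nat set) \<Rightarrow> nat \<Rightarrow> nat \<Rightarrow> nat set set set" where
  "Jset E s d = {J. parity_join E s J \<and> card J = d \<and>
     (\<forall>C. eulerian E s C \<and> even (card C) \<and> 2 * card (J \<inter> C) = card C \<longrightarrow> last_edge E s C \<in> J)}"

end

theory Submission
  imports Defs
begin


definition sd :: "'a set \<Rightarrow> 'a set \<Rightarrow> 'a set" where "sd A B = (A - B) \<union> (B - A)"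

lemma card_sd: "finite A \<Longrightarrow> finite B \<Longrightarrow> card A + card B = card (sd A B) + 2 * card (A \<inter> B)"
proof -
  assume f: "finite A" "finite B"
  have e1: "A = (A - B) \<union> (A \<inter> B)" by auto
  have 1: "card A = card (A - B) + card (A \<inter> B)"
    using f by (subst e1, intro card_Un_disjoint) auto
  have e2: "B = (B - A) \<union> (A \<inter> B)" by auto
  have 2: "card B = card (B - A) + card (A \<inter> B)"
    using f by (subst e2, intro card_Un_disjoint) auto
  have 3: "card (sd A B) = card (A - B) + card (B - A)"
    unfolding sd_def using f by (intro card_Un_disjoint) auto
  show ?thesis using 1 2 3 by simp
qed

lemma sd_sd: "sd A (sd A B) = B" unfolding sd_def by auto
lemma sd_sym: "sd A B = sd B A" unfolding sd_def by auto

definition num :: "nat set \<Rightarrow> nat" where "num A = (\<Sum>k\<in>A. 2 ^ k)"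

lemma sum_pow2_less: "(\<Sum>k<m. (2::nat) ^ k) < 2 ^ m"
  by (induction m) auto

lemma num_less:
  assumes f: "finite X" "finite Y" and ne: "X \<noteq> Y" and mx: "Max (sd X Y) \<in> Y"
  shows "num X < num Y"
proof -
  define m where "m = Max (sd X Y)"
  have fs: "finite (sd X Y)" using f unfolding sd_def by auto
  have nes: "sd X Y \<noteq> {}" using ne unfolding sd_def by auto
  have sub: "X - Y \<subseteq> {..<m}"
  proof
    fix k assume k: "k \<in> X - Y"
    then have "k \<in> sd X Y" unfolding sd_def by auto
    then have "k \<le> m" unfolding m_def using fs by auto
    moreover have "k \<noteq> m" using k mx m_def by auto
    ultimately show "k \<in> {..<m}" by auto
  qed
  have mY: "m \<in> Y - X" using mx m_def Max_in[OF fs nes] unfolding sd_def by auto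
  have "num X = num (X \<inter> Y) + num (X - Y)"
    unfolding num_def using f by (subst sum.union_disjoint[symmetric]) (auto intro: sum.cong)
  also have "num (X - Y) \<le> (\<Sum>k<m. 2 ^ k)"
    unfolding num_def using sub by (intro sum_mono2) auto
  also have "(\<Sum>k<m. (2::nat) ^ k) < 2 ^ m" by (rule sum_pow2_less)
  also have "(2::nat) ^ m \<le> num (Y - X)"
    unfolding num_def using mY f by (intro member_le_sum) auto
  also have "num (X \<inter> Y) + num (Y - X) = num Y"
    unfolding num_def using f by (subst sum.union_disjoint[symmetric]) (auto intro: sum.cong)
  finally show ?thesis by simp
qed

locale G =
  fixes n s :: nat and E :: "nat \<Rightarrow> nat set"
  assumes s1: "s \<ge> 1"
    and Ek: "\<forall>k\<in>{1..s}. E k \<subseteq> {1..n} \<and> card (E k) = 2"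
    and injE: "inj_on E {1..s}"
begin

definition deg :: "nat set \<Rightarrow> nat \<Rightarrow> nat" where "deg A i = card {k\<in>A. i \<in> E k}"

definition rel :: "nat set \<Rightarrow> nat set \<Rightarrow> bool" where
  "rel A B \<longleftrightarrow> (\<forall>i. even (deg A i + deg B i)) \<and> even (card A + card B)"

definition evs :: "nat set \<Rightarrow> bool" where "evs C \<longleftrightarrow> (\<forall>i. even (deg C i))"

definition canI :: "nat set \<Rightarrow> bool" where
  "canI A \<longleftrightarrow> A \<subseteq> {1..s} \<and> (\<forall>C. C \<subseteq> {1..s} \<and> C \<noteq> {} \<and> evs C \<and> even (card C) \<longrightarrow>
      2 * card (A \<inter> C) \<le> card C \<and> (2 * card (A \<inter> C) = card C \<longrightarrow> Max C \<in> A))"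

lemma deg_sd: "finite A \<Longrightarrow> finite B \<Longrightarrow> deg A i + deg B i = deg (sd A B) i + 2 * deg (A \<inter> B) i"
proof -
  assume f: "finite A" "finite B"
  have "card {k\<in>A. i \<in> E k} + card {k\<in>B. i \<in> E k} = card (sd {k\<in>A. i \<in> E k} {k\<in>B. i \<in> E k}) + 2 * card ({k\<in>A. i \<in> E k} \<inter> {k\<in>B. i \<in> E k})"
    using f by (intro card_sd) auto
  moreover have "sd {k\<in>A. i \<in> E k} {k\<in>B. i \<in> E k} = {k\<in>sd A B. i \<in> E k}" unfolding sd_def by auto
  moreover have "{k\<in>A. i \<in> E k} \<inter> {k\<in>B. i \<in> E k} = {k\<in>A \<inter> B. i \<in> E k}" by auto
  ultimately show ?thesis unfolding deg_def by simp
qed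

lemma evs_sd: "finite A \<Longrightarrow> finite B \<Longrightarrow> evs (sd A B) \<longleftrightarrow> (\<forall>i. even (deg A i + deg B i))"
  unfolding evs_def using deg_sd[of A B] by simp

lemma rel_sym: "rel A B \<Longrightarrow> rel B A" unfolding rel_def by (simp add: add.commute)
lemma rel_refl: "rel A A" unfolding rel_def by simp
lemma rel_trans: "rel A B \<Longrightarrow> rel B C \<Longrightarrow> rel A C"
  unfolding rel_def by (auto simp: even_add)

lemma rel_sd:
  assumes "finite A" "finite C" "evs C" "even (card C)"
  shows "rel A (sd A C)"
proof -
  have fs: "finite (sd A C)" using assms unfolding sd_def by auto
  have "evs (sd A (sd A C))" using assms by (simp add: sd_sd)
  then have 1: "\<forall>i. even (deg A i + deg (sd A C) i)" using evs_sd[OF assms(1) fs] by simp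
  have "card A + card (sd A C) = card (sd A (sd A C)) + 2 * card (A \<inter> sd A C)"
    using assms fs by (intro card_sd) auto
  then have "even (card A + card (sd A C))" using assms by (simp add: sd_sd)
  with 1 show ?thesis unfolding rel_def by simp
qed

lemma can_min:
  assumes cA: "canI A" and B: "B \<subseteq> {1..s}" and r: "rel A B"
  shows "card A \<le> card B"
proof (cases "A = B")
  case True then show ?thesis by simp
next
  case False
  define C where "C = sd A B"
  have fA: "finite A" using cA unfolding canI_def by (meson finite_atLeastAtMost finite_subset)
  have fB: "finite B" using B by (meson finite_atLeastAtMost finite_subset)
  have Cs: "C \<subseteq> {1..s}" using B cA unfolding C_def sd_def canI_def by auto
  have Cne: "C \<noteq> {}" using False unfolding C_def sd_def by auto
  have Cev: "evs C" using evs_sd[OF fA fB] r unfolding C_def rel_def by simp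
  have "card A + card B = card C + 2 * card (A \<inter> B)" unfolding C_def using fA fB by (rule card_sd)
  then have Ccard: "even (card C)" using r unfolding rel_def by (simp add: even_add)
  have fC: "finite C" using Cs by (meson finite_atLeastAtMost finite_subset)
  have le: "2 * card (A \<inter> C) \<le> card C" using cA Cs Cne Cev Ccard unfolding canI_def by blast
  have "card A + card C = card (sd A C) + 2 * card (A \<inter> C)" using fA fC by (rule card_sd)
  moreover have "sd A C = B" unfolding C_def by (rule sd_sd)
  ultimately have "card A + card C = card B + 2 * card (A \<inter> C)" by simp
  then show ?thesis using le by linarith
qed

lemma can_unique:
  assumes cA: "canI A" and cB: "canI B" and r: "rel A B"
  shows "A = B"
proof (rule ccontr)
  assume ne: "A \<noteq> B"
  define C where "C = sd A B"
  have fA: "finite A" using cA unfolding canI_def by (meson finite_atLeastAtMost finite_subset)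
  have fB: "finite B" using cB unfolding canI_def by (meson finite_atLeastAtMost finite_subset)
  have Cs: "C \<subseteq> {1..s}" using cB cA unfolding C_def sd_def canI_def by auto
  have Cne: "C \<noteq> {}" using ne unfolding C_def sd_def by auto
  have Cev: "evs C" using evs_sd[OF fA fB] r unfolding C_def rel_def by simp
  have "card A + card B = card C + 2 * card (A \<inter> B)" unfolding C_def using fA fB by (rule card_sd)
  then have Ccard: "even (card C)" using r unfolding rel_def by (simp add: even_add)
  have leA: "2 * card (A \<inter> C) \<le> card C" and tA: "2 * card (A \<inter> C) = card C \<longrightarrow> Max C \<in> A"
    using cA Cs Cne Cev Ccard unfolding canI_def by blast+
  have leB: "2 * card (B \<inter> C) \<le> card C" and tB: "2 * card (B \<inter> C) = card C \<longrightarrow> Max C \<in> B"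
    using cB Cs Cne Cev Ccard unfolding canI_def by blast+
  have "A \<inter> C = A - B" "B \<inter> C = B - A" unfolding C_def sd_def by auto
  moreover have "card C = card (A - B) + card (B - A)"
    unfolding C_def sd_def using fA fB by (intro card_Un_disjoint) auto
  ultimately have "2 * card (A \<inter> C) = card C" "2 * card (B \<inter> C) = card C" using leA leB by auto
  then have "Max C \<in> A" "Max C \<in> B" using tA tB by auto
  moreover have "Max C \<in> C" using Cne Cs by (meson Max_in finite_atLeastAtMost finite_subset)
  ultimately show False unfolding C_def sd_def by auto
qed

lemma can_subset:
  assumes cA: "canI A" and sub: "A' \<subseteq> A"
  shows "canI A'"
  unfolding canI_def
proof (intro conjI allI impI)
  show "A' \<subseteq> {1..s}" using cA sub unfolding canI_def by auto
  fix C assume C: "C \<subseteq> {1..s} \<and> C \<noteq> {} \<and> evs C \<and> even (card C)"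
  have fC: "finite C" using C by (meson finite_atLeastAtMost finite_subset)
  have le: "2 * card (A \<inter> C) \<le> card C" and t: "2 * card (A \<inter> C) = card C \<longrightarrow> Max C \<in> A"
    using cA C unfolding canI_def by blast+
  have mono: "card (A' \<inter> C) \<le> card (A \<inter> C)" using sub fC by (intro card_mono) auto
  show "2 * card (A' \<inter> C) \<le> card C" using le mono by linarith
  assume eq: "2 * card (A' \<inter> C) = card C"
  then have "card (A' \<inter> C) = card (A \<inter> C)" using le mono by linarith
  moreover have "A' \<inter> C \<subseteq> A \<inter> C" using sub by auto
  ultimately have "A' \<inter> C = A \<inter> C" using fC by (intro card_subset_eq) auto
  moreover have "Max C \<in> A" using t eq le mono by linarith
  moreover have "Max C \<in> C" using C fC by auto
  ultimately show "Max C \<in> A'" by blast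
qed

lemma can_exists:
  assumes B: "B \<subseteq> {1..s}"
  shows "\<exists>A. canI A \<and> rel B A \<and> card A \<le> card B"
proof -
  define S where "S = {A. A \<subseteq> {1..s} \<and> rel B A}"
  have fS: "finite S" unfolding S_def by simp
  have BS: "B \<in> S" unfolding S_def using B rel_refl by auto
  define m where "m = Min (card ` S)"
  have mle: "\<And>A. A \<in> S \<Longrightarrow> m \<le> card A" unfolding m_def using fS by auto
  have "m \<in> card ` S" unfolding m_def using fS BS by (intro Min_in) auto
  define S' where "S' = {A\<in>S. card A = m}"
  have fS': "finite S'" using fS unfolding S'_def by auto
  have neS': "S' \<noteq> {}" using \<open>m \<in> card ` S\<close> unfolding S'_def by auto
  define M where "M = Max (num ` S')"
  have "M \<in> num ` S'" unfolding M_def using fS' neS' by (intro Max_in) auto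
  then obtain A where AS': "A \<in> S'" and nA: "num A = M" by auto
  have maxA: "\<And>A'. A' \<in> S' \<Longrightarrow> num A' \<le> num A" using nA fS' unfolding M_def by auto
  have As: "A \<subseteq> {1..s}" and rA: "rel B A" and cardA: "card A = m" using AS' unfolding S'_def S_def by auto
  have fA: "finite A" using As by (meson finite_atLeastAtMost finite_subset)
  have "canI A" unfolding canI_def
  proof (intro conjI allI impI)
    show "A \<subseteq> {1..s}" by (rule As)
    fix C assume C: "C \<subseteq> {1..s} \<and> C \<noteq> {} \<and> evs C \<and> even (card C)"
    have fC: "finite C" using C by (meson finite_atLeastAtMost finite_subset)
    define A' where "A' = sd A C"
    have rAA': "rel A A'" unfolding A'_def using fA fC C by (intro rel_sd) auto
    have A's: "A' \<subseteq> {1..s}" unfolding A'_def sd_def using As C by auto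
    have A'S: "A' \<in> S" unfolding S_def using A's rel_trans[OF rA rAA'] by auto
    have cc: "card A + card C = card A' + 2 * card (A \<inter> C)" unfolding A'_def using fA fC by (rule card_sd)
    have "m \<le> card A'" using mle A'S .
    then show le: "2 * card (A \<inter> C) \<le> card C" using cc cardA by linarith
    assume eq: "2 * card (A \<inter> C) = card C"
    show "Max C \<in> A"
    proof (rule ccontr)
      assume nm: "Max C \<notin> A"
      have "card A' = m" using cc eq cardA by linarith
      then have "A' \<in> S'" using A'S unfolding S'_def by auto
      then have le2: "num A' \<le> num A" by (rule maxA)
      have fA': "finite A'" using A's by (meson finite_atLeastAtMost finite_subset)
      have sdAA': "sd A A' = C" unfolding A'_def by (rule sd_sd)
      have "A \<noteq> A'" using sdAA' C unfolding sd_def by auto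
      moreover have "Max (sd A A') \<in> A'" using sdAA' nm C fC unfolding A'_def sd_def by auto
      ultimately have "num A < num A'" using num_less fA fA' by blast
      then show False using le2 by simp
    qed
  qed
  moreover have "card A \<le> card B" using mle[OF BS] cardA by simp
  ultimately show ?thesis using rA by blast
qed

end



lemma K3: "(3::K) = 0"
  using of_nat_card_eq_0[where 'a=three] by (simp add: card_three)
lemma K_cases: "(x::K) = 0 \<or> x = 1 \<or> x = -1"
proof -
  obtain i where "i < 3" "x = of_nat i" using surj_of_nat_mod_ring[of x] by (auto simp: card_three)
  then have "i = 0 \<or> i = 1 \<or> i = 2" by auto
  moreover have "(2::K) = -1" using K3 by (simp add: eq_neg_iff_add_eq_0)
  ultimately show ?thesis using \<open>x = of_nat i\<close> by auto
qed
lemma K_sq: "(x::K) \<noteq> 0 \<Longrightarrow> x^2 = 1"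
  using K_cases[of x] by auto
lemma K_two: "(2::K) \<noteq> 0"
proof
  assume "(2::K) = 0"
  then have "(3::K) = 1" by (metis add_0 numeral_plus_one semiring_norm(5))
  then show False using K3 by simp
qed
lemma K_m1: "(-1::K) \<noteq> 1"
proof
  assume "(-1::K) = 1"
  then have "(2::K) = 0" by (metis add.inverse_inverse diff_minus_eq_add one_add_one right_minus_eq)
  then show False using K_two by simp
qed
lemma K_pow_mod: "(x::K)^2 = 1 \<Longrightarrow> x ^ a = x ^ (a mod 2)"
proof -
  assume h: "x^2 = 1"
  have "x ^ a = x ^ (2 * (a div 2) + a mod 2)" by simp
  also have "\<dots> = (x^2) ^ (a div 2) * x ^ (a mod 2)" by (simp only: power_add power_mult)
  finally show ?thesis using h by simp
qed

lemma sum_parity: "finite K \<Longrightarrow> even (\<Sum>k\<in>K. (f k::nat)) \<longleftrightarrow> even (card {k\<in>K. odd (f k)})"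
proof (induction K rule: finite_induct)
  case empty then show ?case by simp
next
  case (insert x F)
  have "{k \<in> insert x F. odd (f k)} = (if odd (f x) then insert x {k\<in>F. odd (f k)} else {k\<in>F. odd (f k)})" by auto
  then show ?case using insert by auto
qed

definition ind :: "nat set \<Rightarrow> mon" where "ind A = (\<Sum>k\<in>A. Poly_Mapping.single k 1)"

lemma lookup_ind: "finite A \<Longrightarrow> Poly_Mapping.lookup (ind A) k = (if k \<in> A then 1 else 0)"
  unfolding ind_def lookup_sum lookup_single by (simp add: when_def)

lemma keys_ind: "finite A \<Longrightarrow> Poly_Mapping.keys (ind A) = A"
  using lookup_ind by (auto simp: in_keys_iff split: if_splits)

lemma mdeg_super: "finite S \<Longrightarrow> Poly_Mapping.keys \<gamma> \<subseteq> S \<Longrightarrow> mdeg \<gamma> = (\<Sum>k\<in>S. Poly_Mapping.lookup \<gamma> k)"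
  unfolding mdeg_def by (intro sum.mono_neutral_left) (auto simp: in_keys_iff)

lemma mdeg_ind: "finite A \<Longrightarrow> mdeg (ind A) = card A"
  unfolding mdeg_def by (simp add: keys_ind lookup_ind)

lemma mdeg_add: "mdeg (\<alpha> + \<beta>) = mdeg \<alpha> + mdeg \<beta>"
proof -
  let ?S = "Poly_Mapping.keys \<alpha> \<union> Poly_Mapping.keys \<beta>"
  have "mdeg (\<alpha> + \<beta>) = (\<Sum>k\<in>?S. Poly_Mapping.lookup (\<alpha> + \<beta>) k)"
    using keys_add[of \<alpha> \<beta>] by (intro mdeg_super) auto
  also have "\<dots> = (\<Sum>k\<in>?S. Poly_Mapping.lookup \<alpha> k) + (\<Sum>k\<in>?S. Poly_Mapping.lookup \<beta> k)"
    by (simp add: lookup_add sum.distrib)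
  also have "\<dots> = mdeg \<alpha> + mdeg \<beta>"
    using mdeg_super[of ?S \<alpha>] mdeg_super[of ?S \<beta>] by simp
  finally show ?thesis .
qed

lemma mdeg_single: "mdeg (Poly_Mapping.single k m) = m"
  unfolding mdeg_def by auto

definition oddset :: "mon \<Rightarrow> nat set" where
  "oddset \<gamma> = {k\<in>Poly_Mapping.keys \<gamma>. odd (Poly_Mapping.lookup \<gamma> k)}"

lemma oddset_parity: "even (mdeg \<gamma>) \<longleftrightarrow> even (card (oddset \<gamma>))"
  unfolding mdeg_def oddset_def by (rule sum_parity) simp

lemma oddset_card: "card (oddset \<gamma>) \<le> mdeg \<gamma> \<and> (card (oddset \<gamma>) = mdeg \<gamma> \<longrightarrow> (\<forall>k. Poly_Mapping.lookup \<gamma> k \<le> 1))"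
proof -
  let ?K = "Poly_Mapping.keys \<gamma>"
  let ?l = "Poly_Mapping.lookup \<gamma>"
  define o1 where "o1 k = (if odd (?l k) then 1 else 0::nat)" for k
  have "mdeg \<gamma> = (\<Sum>k\<in>?K. o1 k + (?l k - o1 k))"
    unfolding mdeg_def o1_def by (intro sum.cong) auto
  also have "\<dots> = (\<Sum>k\<in>?K. o1 k) + (\<Sum>k\<in>?K. ?l k - o1 k)" by (rule sum.distrib)
  also have "(\<Sum>k\<in>?K. o1 k) = card (oddset \<gamma>)"
    unfolding oddset_def o1_def by (simp add: sum.If_cases Int_def)
  finally have eq: "mdeg \<gamma> = card (oddset \<gamma>) + (\<Sum>k\<in>?K. ?l k - o1 k)" .
  have "\<forall>k. ?l k \<le> 1" if h: "card (oddset \<gamma>) = mdeg \<gamma>"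
  proof
    fix k
    have z: "(\<Sum>k\<in>?K. ?l k - o1 k) = 0" using eq h by simp
    show "?l k \<le> 1"
    proof (cases "k \<in> ?K")
      case True
      then have "?l k - o1 k = 0" using z by simp
      then show ?thesis unfolding o1_def by presburger
    next
      case False then show ?thesis by (simp add: in_keys_iff)
    qed
  qed
  then show ?thesis using eq by simp
qed

lemma squarefree_ind: "(\<forall>k. Poly_Mapping.lookup \<gamma> k \<le> 1) \<Longrightarrow> \<gamma> = ind (Poly_Mapping.keys \<gamma>)"
proof (rule poly_mapping_eqI)
  fix k assume h: "\<forall>k. Poly_Mapping.lookup \<gamma> k \<le> 1"
  then have "Poly_Mapping.lookup \<gamma> k = 0 \<or> Poly_Mapping.lookup \<gamma> k = 1" using le_Suc_eq by auto
  then show "Poly_Mapping.lookup \<gamma> k = Poly_Mapping.lookup (ind (Poly_Mapping.keys \<gamma>)) k"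
    by (auto simp: lookup_ind in_keys_iff)
qed

lemma oddset_ind: "finite A \<Longrightarrow> oddset (ind A) = A"
  unfolding oddset_def by (auto simp: keys_ind lookup_ind)

definition pv :: "mon \<Rightarrow> (nat \<Rightarrow> K) \<Rightarrow> K" where
  "pv \<gamma> v = (\<Prod>k\<in>Poly_Mapping.keys \<gamma>. v k ^ Poly_Mapping.lookup \<gamma> k)"

lemma pv_super: "finite S \<Longrightarrow> Poly_Mapping.keys \<gamma> \<subseteq> S \<Longrightarrow> pv \<gamma> v = (\<Prod>k\<in>S. v k ^ Poly_Mapping.lookup \<gamma> k)"
  unfolding pv_def by (intro prod.mono_neutral_left) (auto simp: in_keys_iff)

lemma pv_add: "pv (\<alpha> + \<beta>) v = pv \<alpha> v * pv \<beta> v"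
proof -
  let ?S = "Poly_Mapping.keys \<alpha> \<union> Poly_Mapping.keys \<beta>"
  have "pv (\<alpha> + \<beta>) v = (\<Prod>k\<in>?S. v k ^ Poly_Mapping.lookup (\<alpha> + \<beta>) k)"
    using keys_add[of \<alpha> \<beta>] by (intro pv_super) auto
  also have "\<dots> = (\<Prod>k\<in>?S. v k ^ Poly_Mapping.lookup \<alpha> k) * (\<Prod>k\<in>?S. v k ^ Poly_Mapping.lookup \<beta> k)"
    by (simp add: lookup_add power_add prod.distrib)
  also have "\<dots> = pv \<alpha> v * pv \<beta> v"
    using pv_super[of ?S \<alpha> v] pv_super[of ?S \<beta> v] by simp
  finally show ?thesis .
qed

lemma pv_scale: "pv \<gamma> (\<lambda>k. c * v k) = c ^ mdeg \<gamma> * pv \<gamma> v"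
  unfolding pv_def mdeg_def by (simp add: power_mult_distrib prod.distrib power_sum)

lemma peval_pv: "peval f v = (\<Sum>\<gamma>\<in>Poly_Mapping.keys f. Poly_Mapping.lookup f \<gamma> * pv \<gamma> v)"
  unfolding peval_def pv_def by simp

lemma pv_single1: "pv (Poly_Mapping.single k m) v = v k ^ m"
  unfolding pv_def by auto

context G begin

definition dg :: "mon \<Rightarrow> nat \<Rightarrow> nat" where
  "dg \<gamma> i = (\<Sum>k\<in>{k\<in>Poly_Mapping.keys \<gamma>. i \<in> E k}. Poly_Mapping.lookup \<gamma> k)"

lemma dg_super: "finite S \<Longrightarrow> Poly_Mapping.keys \<gamma> \<subseteq> S \<Longrightarrow> dg \<gamma> i = (\<Sum>k\<in>{k\<in>S. i \<in> E k}. Poly_Mapping.lookup \<gamma> k)"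
  unfolding dg_def by (intro sum.mono_neutral_left) (auto simp: in_keys_iff)

lemma dg_add: "dg (\<alpha> + \<beta>) i = dg \<alpha> i + dg \<beta> i"
proof -
  let ?S = "Poly_Mapping.keys \<alpha> \<union> Poly_Mapping.keys \<beta>"
  have "dg (\<alpha> + \<beta>) i = (\<Sum>k\<in>{k\<in>?S. i \<in> E k}. Poly_Mapping.lookup (\<alpha> + \<beta>) k)"
    using keys_add[of \<alpha> \<beta>] by (intro dg_super) auto
  also have "\<dots> = (\<Sum>k\<in>{k\<in>?S. i \<in> E k}. Poly_Mapping.lookup \<alpha> k) + (\<Sum>k\<in>{k\<in>?S. i \<in> E k}. Poly_Mapping.lookup \<beta> k)"
    by (simp add: lookup_add sum.distrib)
  also have "\<dots> = dg \<alpha> i + dg \<beta> i"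
    using dg_super[of ?S \<alpha> i] dg_super[of ?S \<beta> i] by simp
  finally show ?thesis .
qed

lemma dg_ind: "finite A \<Longrightarrow> dg (ind A) i = deg A i"
  unfolding dg_def deg_def by (simp add: keys_ind lookup_ind)

lemma dg_parity: "even (dg \<gamma> i) \<longleftrightarrow> even (deg (oddset \<gamma>) i)"
proof -
  have "even (dg \<gamma> i) \<longleftrightarrow> even (card {k\<in>{k\<in>Poly_Mapping.keys \<gamma>. i \<in> E k}. odd (Poly_Mapping.lookup \<gamma> k)})"
    unfolding dg_def by (rule sum_parity) simp
  moreover have "{k\<in>{k\<in>Poly_Mapping.keys \<gamma>. i \<in> E k}. odd (Poly_Mapping.lookup \<gamma> k)} = {k\<in>oddset \<gamma>. i \<in> E k}"
    unfolding oddset_def by auto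
  ultimately show ?thesis unfolding deg_def by simp
qed

lemma dg_single: "dg (Poly_Mapping.single k m) i = (if i \<in> E k then m else 0)"
proof -
  have "dg (Poly_Mapping.single k m) i = (\<Sum>k'\<in>{k'\<in>{k}. i \<in> E k'}. Poly_Mapping.lookup (Poly_Mapping.single k m) k')"
    by (rule dg_super) auto
  also have "{k'\<in>{k}. i \<in> E k'} = (if i \<in> E k then {k} else {})" by auto
  finally show ?thesis by simp
qed

lemma dg_out: "Poly_Mapping.keys \<gamma> \<subseteq> {1..s} \<Longrightarrow> i \<notin> {1..n} \<Longrightarrow> dg \<gamma> i = 0"
proof -
  assume a: "Poly_Mapping.keys \<gamma> \<subseteq> {1..s}" "i \<notin> {1..n}"
  have "{k\<in>Poly_Mapping.keys \<gamma>. i \<in> E k} = {}" using a Ek by blast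
  then show ?thesis unfolding dg_def by (metis sum.empty)
qed

abbreviation tw :: "(nat \<Rightarrow> K) \<Rightarrow> nat \<Rightarrow> K" where "tw x \<equiv> torus_image E s x"

lemma pv_tw: "Poly_Mapping.keys \<gamma> \<subseteq> {1..s} \<Longrightarrow> pv \<gamma> (tw x) = (\<Prod>i\<in>{1..n}. x i ^ dg \<gamma> i)"
proof -
  assume ks: "Poly_Mapping.keys \<gamma> \<subseteq> {1..s}"
  let ?K = "Poly_Mapping.keys \<gamma>"
  have "pv \<gamma> (tw x) = (\<Prod>k\<in>?K. (\<Prod>i\<in>E k. x i) ^ Poly_Mapping.lookup \<gamma> k)"
    unfolding pv_def torus_image_def using ks by (intro prod.cong) auto
  also have "\<dots> = (\<Prod>k\<in>?K. \<Prod>i\<in>{i\<in>{1..n}. i \<in> E k}. x i ^ Poly_Mapping.lookup \<gamma> k)"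
  proof (intro prod.cong refl)
    fix k assume "k \<in> ?K"
    then have "E k \<subseteq> {1..n}" using ks Ek by auto
    then have "{i\<in>{1..n}. i \<in> E k} = E k" by auto
    then show "(\<Prod>i\<in>E k. x i) ^ Poly_Mapping.lookup \<gamma> k = (\<Prod>i\<in>{i\<in>{1..n}. i \<in> E k}. x i ^ Poly_Mapping.lookup \<gamma> k)"
      by (simp add: prod_power_distrib)
  qed
  also have "\<dots> = (\<Prod>i\<in>{1..n}. \<Prod>k\<in>{k\<in>?K. i \<in> E k}. x i ^ Poly_Mapping.lookup \<gamma> k)"
    by (rule prod.swap_restrict) auto
  also have "\<dots> = (\<Prod>i\<in>{1..n}. x i ^ dg \<gamma> i)"
    unfolding dg_def by (simp add: power_sum)
  finally show ?thesis .
qed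

lemma pv_tw_parity:
  assumes ks: "Poly_Mapping.keys \<gamma> \<subseteq> {1..s}" "Poly_Mapping.keys \<delta> \<subseteq> {1..s}"
    and x: "\<forall>i\<in>{1..n}. x i \<noteq> 0" and ev: "\<forall>i. even (dg \<gamma> i + dg \<delta> i)"
  shows "pv \<gamma> (tw x) = pv \<delta> (tw x)"
proof -
  have "\<And>i. i \<in> {1..n} \<Longrightarrow> x i ^ dg \<gamma> i = x i ^ dg \<delta> i"
  proof -
    fix i assume i: "i \<in> {1..n}"
    have sq: "x i ^ 2 = 1" using x i K_sq by auto
    have pr: "\<And>a b::nat. even (a+b) \<Longrightarrow> a mod 2 = b mod 2" by presburger
    have "dg \<gamma> i mod 2 = dg \<delta> i mod 2" using ev[rule_format, of i] by (rule pr)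
    then show "x i ^ dg \<gamma> i = x i ^ dg \<delta> i" using K_pow_mod[OF sq] by metis
  qed
  then show ?thesis using ks by (simp add: pv_tw)
qed

lemma Xset_rep:
  assumes "P \<in> Xset E n s" "v \<in> P"
  shows "\<exists>x c. (\<forall>i\<in>{1..n}. x i \<noteq> 0) \<and> c \<noteq> 0 \<and> P = pclass (tw x) \<and> v = (\<lambda>k. c * tw x k)"
  using assms unfolding Xset_def pclass_def by auto

lemma EVAL:
  assumes ks: "Poly_Mapping.keys \<gamma> \<subseteq> {1..s}" "Poly_Mapping.keys \<delta> \<subseteq> {1..s}"
    and md: "mdeg \<gamma> = mdeg \<delta>" and ev: "\<forall>i. even (dg \<gamma> i + dg \<delta> i)"
    and P: "P \<in> Xset E n s" "v \<in> P"
  shows "pv \<gamma> v = pv \<delta> v"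
proof -
  obtain x c where x: "\<forall>i\<in>{1..n}. x i \<noteq> 0" and v: "v = (\<lambda>k. c * tw x k)"
    using Xset_rep[OF P] by blast
  show ?thesis unfolding v pv_scale using pv_tw_parity[OF ks x ev] md by simp
qed

definition Sg :: "(nat \<Rightarrow> K) set" where "Sg = PiE {1..n} (\<lambda>_. {1, -1})"

lemma Sg_nz: "x \<in> Sg \<Longrightarrow> \<forall>i\<in>{1..n}. x i \<noteq> 0"
  unfolding Sg_def by (auto simp: PiE_def Pi_def)

lemma finite_Sg: "finite Sg" unfolding Sg_def by (intro finite_PiE) auto

lemma Sg_X: "x \<in> Sg \<Longrightarrow> pclass (tw x) \<in> Xset E n s \<and> tw x \<in> pclass (tw x)"
  unfolding Xset_def pclass_def using Sg_nz
  by (auto intro!: exI[of _ 1] exI[of _ x])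

lemma sum_pm1: "(\<Sum>y\<in>{1, -1::K}. y ^ m) = (if even m then 2 else 0)"
proof -
  have "(\<Sum>y\<in>{1, -1::K}. y ^ m) = 1 + (-1) ^ m" using K_m1 by (subst sum.insert) auto
  then show ?thesis by (cases "even m") auto
qed

lemma ORTH:
  assumes ks: "Poly_Mapping.keys \<gamma> \<subseteq> {1..s}" "Poly_Mapping.keys \<delta> \<subseteq> {1..s}"
  shows "(\<Sum>x\<in>Sg. pv \<gamma> (tw x) * pv \<delta> (tw x)) = (if \<forall>i. even (dg \<gamma> i + dg \<delta> i) then 2 ^ n else 0)"
proof -
  have "(\<Sum>x\<in>Sg. pv \<gamma> (tw x) * pv \<delta> (tw x)) = (\<Sum>x\<in>Sg. \<Prod>i\<in>{1..n}. x i ^ (dg \<gamma> i + dg \<delta> i))"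
    using ks by (simp add: pv_tw power_add prod.distrib)
  also have "\<dots> = (\<Prod>i\<in>{1..n}. \<Sum>y\<in>{1, -1::K}. y ^ (dg \<gamma> i + dg \<delta> i))"
    unfolding Sg_def by (rule prod_sum_PiE[symmetric]) auto
  also have "\<dots> = (\<Prod>i\<in>{1..n}. if even (dg \<gamma> i + dg \<delta> i) then 2 else 0)"
    by (simp add: sum_pm1)
  also have "\<dots> = (if \<forall>i. even (dg \<gamma> i + dg \<delta> i) then 2 ^ n else 0)"
  proof (cases "\<forall>i. even (dg \<gamma> i + dg \<delta> i)")
    case True then show ?thesis by simp
  next
    case False
    then obtain i where i: "odd (dg \<gamma> i + dg \<delta> i)" by blast
    then have "i \<in> {1..n}" using dg_out[OF ks(1)] dg_out[OF ks(2)] by fastforce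
    then show ?thesis using False i by (intro trans[OF prod_zero]) auto
  qed
  finally show ?thesis .
qed

end



lemma keys_binom:
  assumes "\<alpha> \<noteq> \<beta>"
  shows "Poly_Mapping.keys (Poly_Mapping.single \<alpha> (1::K) - Poly_Mapping.single \<beta> 1) = {\<alpha>, \<beta>}"
  using assms by (auto simp: in_keys_iff lookup_minus lookup_single when_def split: if_splits)

lemma lookup_binom:
  assumes "\<alpha> \<noteq> \<beta>"
  shows "Poly_Mapping.lookup (Poly_Mapping.single \<alpha> (1::K) - Poly_Mapping.single \<beta> 1) \<alpha> = 1"
    "Poly_Mapping.lookup (Poly_Mapping.single \<alpha> (1::K) - Poly_Mapping.single \<beta> 1) \<beta> = -1"
  using assms by (auto simp: lookup_minus lookup_single when_def)

lemma grevlex_irrefl: "\<not> grevlex_less \<alpha> \<alpha>"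
  unfolding grevlex_less_def by simp

lemma ideal_gen_single: "g \<in> Gs \<Longrightarrow> g \<in> ideal_gen s Gs"
  unfolding ideal_gen_def
  by (rule CollectI, rule exI[of _ "{g}"], rule exI[of _ "\<lambda>_. 1"]) (auto simp: inS_def)

lemma tvar_sq: "tvar s ^ 2 = Poly_Mapping.single (Poly_Mapping.single s 2) 1"
proof -
  have "tvar s ^ 2 = tvar s * tvar s" by (simp add: power2_eq_square)
  also have "\<dots> = Poly_Mapping.single (Poly_Mapping.single s 1 + Poly_Mapping.single s 1) 1"
    unfolding tvar_def by (simp add: mult_single)
  also have "Poly_Mapping.single s 1 + Poly_Mapping.single s (1::nat) = Poly_Mapping.single s 2"
    by (metis one_add_one single_add)
  finally show ?thesis .
qed

context G begin

lemma card_E: "A \<subseteq> {1..s} \<Longrightarrow> card (E ` A) = card A"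
  using injE by (meson card_image inj_on_subset)

lemma finite_sub: "A \<subseteq> {1..s} \<Longrightarrow> finite A" by (meson finite_atLeastAtMost finite_subset)

lemma degE: "Ci \<subseteq> {1..s} \<Longrightarrow> card {e\<in>E ` Ci. v \<in> e} = deg Ci v"
proof -
  assume Ci: "Ci \<subseteq> {1..s}"
  have "{e\<in>E ` Ci. v \<in> e} = E ` {k\<in>Ci. v \<in> E k}" by auto
  then show ?thesis unfolding deg_def using card_E[of "{k\<in>Ci. v \<in> E k}"] Ci by auto
qed

lemma eulerian_iff:
  "eulerian E s C \<longleftrightarrow> (\<exists>Ci. Ci \<subseteq> {1..s} \<and> Ci \<noteq> {} \<and> evs Ci \<and> C = E ` Ci)"
proof
  assume e: "eulerian E s C"
  define Ci where "Ci = {k\<in>{1..s}. E k \<in> C}"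
  have Csub: "C \<subseteq> E ` {1..s}" using e unfolding eulerian_def edges_def by blast
  have CE: "C = E ` Ci"
  proof (intro equalityI subsetI)
    fix c assume c: "c \<in> C"
    then obtain k where "k \<in> {1..s}" "c = E k" using Csub by blast
    then show "c \<in> E ` Ci" unfolding Ci_def using c by blast
  next
    fix c assume "c \<in> E ` Ci"
    then show "c \<in> C" unfolding Ci_def by blast
  qed
  have Cis: "Ci \<subseteq> {1..s}" unfolding Ci_def by blast
  have "Ci \<noteq> {}" using e CE unfolding eulerian_def by blast
  moreover have "evs Ci"
  proof -
    have dd: "card {e\<in>C. v \<in> e} = deg Ci v" for v using degE[OF Cis, of v] unfolding CE[symmetric] .
    have "\<forall>v. even (card {e\<in>C. v \<in> e})" using e unfolding eulerian_def by blast
    then show ?thesis unfolding evs_def dd .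
  qed
  ultimately show "\<exists>Ci. Ci \<subseteq> {1..s} \<and> Ci \<noteq> {} \<and> evs Ci \<and> C = E ` Ci" using CE Cis by blast
next
  assume "\<exists>Ci. Ci \<subseteq> {1..s} \<and> Ci \<noteq> {} \<and> evs Ci \<and> C = E ` Ci"
  then obtain Ci where Ci: "Ci \<subseteq> {1..s}" "Ci \<noteq> {}" "evs Ci" "C = E ` Ci" by blast
  have "C \<subseteq> edges E s" using Ci(1,4) unfolding edges_def by blast
  moreover have "C \<noteq> {}" using Ci(2,4) by blast
  moreover have "even (card {e\<in>C. v \<in> e})" for v
    unfolding Ci(4) degE[OF Ci(1)] using Ci(3) unfolding evs_def by blast
  ultimately show "eulerian E s C" unfolding eulerian_def by blast
qed

lemma Jset_iff:
  assumes A: "A \<subseteq> {1..s}"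
  shows "E ` A \<in> Jset E s d \<longleftrightarrow> canI A \<and> card A = d"
proof -
  have cint: "card (E ` A \<inter> E ` Ci) = card (A \<inter> Ci)" if Ci: "Ci \<subseteq> {1..s}" for Ci
  proof -
    have "E ` A \<inter> E ` Ci = E ` (A \<inter> Ci)" using inj_on_image_Int[OF injE A Ci] by simp
    moreover have "A \<inter> Ci \<subseteq> {1..s}" using A by blast
    ultimately show ?thesis using card_E by simp
  qed
  have lastE: "(last_edge E s (E ` Ci) \<in> E ` A \<longleftrightarrow> Max Ci \<in> A)" if Ci: "Ci \<subseteq> {1..s}" "Ci \<noteq> {}" for Ci
  proof -
    have "{k\<in>{1..s}. E k \<in> E ` Ci} = Ci"
    proof (intro equalityI subsetI)
      fix k assume "k \<in> {k\<in>{1..s}. E k \<in> E ` Ci}"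
      then obtain j where "k \<in> {1..s}" "j \<in> Ci" "E k = E j" by blast
      then show "k \<in> Ci" using inj_onD[OF injE] Ci by blast
    next
      fix k assume "k \<in> Ci" then show "k \<in> {k\<in>{1..s}. E k \<in> E ` Ci}" using Ci by blast
    qed
    then have le: "last_edge E s (E ` Ci) = E (Max Ci)" unfolding last_edge_def by simp
    have "Max Ci \<in> {1..s}" using Ci finite_sub[of Ci] Max_in by blast
    then show ?thesis unfolding le using inj_on_image_mem_iff[OF injE _ A] by blast
  qed
  let ?P = "\<lambda>Ci. Ci \<subseteq> {1..s} \<and> Ci \<noteq> {} \<and> evs Ci \<and> even (card Ci)"
  let ?Q = "\<lambda>Ci. 2 * card (A \<inter> Ci) \<le> card Ci \<and> (2 * card (A \<inter> Ci) = card Ci \<longrightarrow> Max Ci \<in> A)"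
  have QQ: "(2 * card (E ` A \<inter> E ` Ci) \<le> card (E ` Ci) \<and> (2 * card (E ` A \<inter> E ` Ci) = card (E ` Ci) \<longrightarrow> last_edge E s (E ` Ci) \<in> E ` A)) \<longleftrightarrow> ?Q Ci"
    if P: "?P Ci" for Ci
  proof -
    have e1: "card (E ` A \<inter> E ` Ci) = card (A \<inter> Ci)" using P cint by blast
    have e2: "card (E ` Ci) = card Ci" using P card_E by blast
    have e3: "last_edge E s (E ` Ci) \<in> E ` A \<longleftrightarrow> Max Ci \<in> A" using P lastE by blast
    show ?thesis by (simp only: e1 e2 e3)
  qed
  have PJ: "(\<forall>C. eulerian E s C \<and> even (card C) \<longrightarrow> 2 * card (E ` A \<inter> C) \<le> card C) \<and>
      (\<forall>C. eulerian E s C \<and> even (card C) \<and> 2 * card (E ` A \<inter> C) = card C \<longrightarrow> last_edge E s C \<in> E ` A)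
     \<longleftrightarrow> (\<forall>Ci. ?P Ci \<longrightarrow> ?Q Ci)"
  proof
    assume h: "(\<forall>C. eulerian E s C \<and> even (card C) \<longrightarrow> 2 * card (E ` A \<inter> C) \<le> card C) \<and>
      (\<forall>C. eulerian E s C \<and> even (card C) \<and> 2 * card (E ` A \<inter> C) = card C \<longrightarrow> last_edge E s C \<in> E ` A)"
    show "\<forall>Ci. ?P Ci \<longrightarrow> ?Q Ci"
    proof (intro allI impI)
      fix Ci assume P: "?P Ci"
      then have eu: "eulerian E s (E ` Ci)" unfolding eulerian_iff by blast
      have ec: "even (card (E ` Ci))" using P card_E[of Ci] by simp
      show "?Q Ci" using QQ[OF P] h eu ec by blast
    qed
  next
    assume h: "\<forall>Ci. ?P Ci \<longrightarrow> ?Q Ci"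
    have "\<And>C. eulerian E s C \<Longrightarrow> even (card C) \<Longrightarrow> 2 * card (E ` A \<inter> C) \<le> card C \<and> (2 * card (E ` A \<inter> C) = card C \<longrightarrow> last_edge E s C \<in> E ` A)"
    proof -
      fix C assume eu: "eulerian E s C" and ec: "even (card C)"
      then obtain Ci where Ci: "Ci \<subseteq> {1..s}" "Ci \<noteq> {}" "evs Ci" "C = E ` Ci" unfolding eulerian_iff by blast
      then have P: "?P Ci" using ec card_E[of Ci] by simp
      show "2 * card (E ` A \<inter> C) \<le> card C \<and> (2 * card (E ` A \<inter> C) = card C \<longrightarrow> last_edge E s C \<in> E ` A)"
        using QQ[OF P] h P Ci(4) by blast
    qed
    then show "(\<forall>C. eulerian E s C \<and> even (card C) \<longrightarrow> 2 * card (E ` A \<inter> C) \<le> card C) \<and>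
      (\<forall>C. eulerian E s C \<and> even (card C) \<and> 2 * card (E ` A \<inter> C) = card C \<longrightarrow> last_edge E s C \<in> E ` A)" by blast
  qed
  have sub: "E ` A \<subseteq> edges E s" unfolding edges_def using A by auto
  have "E ` A \<in> Jset E s d \<longleftrightarrow> ((\<forall>C. eulerian E s C \<and> even (card C) \<longrightarrow> 2 * card (E ` A \<inter> C) \<le> card C) \<and>
      (\<forall>C. eulerian E s C \<and> even (card C) \<and> 2 * card (E ` A \<inter> C) = card C \<longrightarrow> last_edge E s C \<in> E ` A)) \<and> card (E ` A) = d"
    unfolding Jset_def parity_join_def mem_Collect_eq using sub by blast
  also have "\<dots> \<longleftrightarrow> (\<forall>Ci. ?P Ci \<longrightarrow> ?Q Ci) \<and> card A = d" by (simp only: PJ card_E[OF A])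
  finally have "E ` A \<in> Jset E s d \<longleftrightarrow> (\<forall>Ci. ?P Ci \<longrightarrow> ?Q Ci) \<and> card A = d" .
  then show ?thesis unfolding canI_def using A by auto
qed

lemma Jset_sub: "J \<in> Jset E s d \<Longrightarrow> J = E ` {k\<in>{1..s}. E k \<in> J}"
  unfolding Jset_def parity_join_def edges_def by auto

abbreviation Id where "Id \<equiv> ideal_gen s (IX E n s \<union> {tvar s ^ 2})"

lemma BIN:
  assumes ks: "Poly_Mapping.keys \<alpha> \<subseteq> {1..s}" "Poly_Mapping.keys \<beta> \<subseteq> {1..s}"
    and md: "mdeg \<alpha> = mdeg \<beta>" and ev: "\<forall>i. even (dg \<alpha> i + dg \<beta> i)"
    and gl: "grevlex_less \<beta> \<alpha>"
  shows "\<exists>f\<in>Id. f \<noteq> 0 \<and> is_lead_mon f \<alpha>"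
proof -
  have ne: "\<alpha> \<noteq> \<beta>" using gl grevlex_irrefl by auto
  define f where "f = Poly_Mapping.single \<alpha> (1::K) - Poly_Mapping.single \<beta> 1"
  have kf: "Poly_Mapping.keys f = {\<alpha>, \<beta>}" unfolding f_def using keys_binom[OF ne] .
  have "inS s f" unfolding inS_def kf using ks by auto
  moreover have "homog (mdeg \<alpha>) f" unfolding homog_def kf using md by auto
  moreover have "\<forall>P\<in>Xset E n s. \<forall>v\<in>P. peval f v = 0"
  proof (intro ballI)
    fix P v assume P: "P \<in> Xset E n s" "v \<in> P"
    have "peval f v = pv \<alpha> v - pv \<beta> v"
      unfolding peval_pv kf using ne lookup_binom[OF ne] unfolding f_def by simp
    then show "peval f v = 0" using EVAL[OF ks md ev P] by simp
  qed
  ultimately have "f \<in> IX E n s" unfolding IX_def by (intro ideal_gen_single) blast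
  then have "f \<in> Id" by (intro ideal_gen_single) blast
  moreover have "f \<noteq> 0" using kf by auto
  moreover have "is_lead_mon f \<alpha>" unfolding is_lead_mon_def kf using gl by auto
  ultimately show ?thesis by blast
qed

lemma tvar_in: "\<exists>f\<in>Id. f \<noteq> 0 \<and> is_lead_mon f (Poly_Mapping.single s 2)"
proof -
  have "tvar s ^ 2 \<in> Id" by (intro ideal_gen_single) blast
  moreover have "Poly_Mapping.keys (tvar s ^ 2) = {Poly_Mapping.single s 2}" unfolding tvar_sq by simp
  ultimately show ?thesis unfolding is_lead_mon_def by (metis empty_iff insert_iff keys_zero)
qed

lemma max_diff:
  assumes ks: "Poly_Mapping.keys \<alpha> \<subseteq> {1..s}" "Poly_Mapping.keys \<beta> \<subseteq> {1..s}"
  shows "{i. Poly_Mapping.lookup \<alpha> i \<noteq> Poly_Mapping.lookup \<beta> i} \<subseteq> {1..s}"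
proof
  fix i assume "i \<in> {i. Poly_Mapping.lookup \<alpha> i \<noteq> Poly_Mapping.lookup \<beta> i}"
  then have "i \<in> Poly_Mapping.keys \<alpha> \<union> Poly_Mapping.keys \<beta>" by (auto simp: in_keys_iff)
  then show "i \<in> {1..s}" using ks by blast
qed

lemma Bset_sqfree:
  assumes g: "\<gamma> \<in> Bset E n s d"
  shows "\<forall>k. Poly_Mapping.lookup \<gamma> k \<le> 1"
proof (rule ccontr)
  assume "\<not> (\<forall>k. Poly_Mapping.lookup \<gamma> k \<le> 1)"
  then obtain k where k0: "\<not> Poly_Mapping.lookup \<gamma> k \<le> 1" by blast
  then have k: "Poly_Mapping.lookup \<gamma> k \<ge> 2" by simp
  have ks: "Poly_Mapping.keys \<gamma> \<subseteq> {1..s}" using g unfolding Bset_def by blast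
  have "k \<in> Poly_Mapping.keys \<gamma>" using k0 by (simp add: in_keys_iff)
  then have kk: "k \<in> {1..s}" using ks by blast
  have nB: "\<not> (\<exists>f\<in>Id. f \<noteq> 0 \<and> (\<exists>\<mu>. is_lead_mon f \<mu> \<and> mdvd \<mu> \<gamma>))" using g unfolding Bset_def by blast
  show False
  proof (cases "k = s")
    case True
    have "mdvd (Poly_Mapping.single s 2) \<gamma>" unfolding mdvd_def
    proof
      fix j show "Poly_Mapping.lookup (Poly_Mapping.single s 2) j \<le> Poly_Mapping.lookup \<gamma> j"
        using k True by (cases "j = s") (simp_all add: lookup_single_not_eq)
    qed
    then show False using tvar_in nB by blast
  next
    case False
    then have ks': "k < s" using kk by simp
    let ?a = "Poly_Mapping.single k (2::nat)" and ?b = "Poly_Mapping.single s (2::nat)"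
    have D: "{i. Poly_Mapping.lookup ?a i \<noteq> Poly_Mapping.lookup ?b i} = {k, s}"
    proof (intro equalityI subsetI)
      fix i assume "i \<in> {i. Poly_Mapping.lookup ?a i \<noteq> Poly_Mapping.lookup ?b i}"
      then show "i \<in> {k, s}" by (cases "i = k"; cases "i = s") (simp_all add: lookup_single_not_eq)
    next
      fix i assume "i \<in> {k, s}"
      then show "i \<in> {i. Poly_Mapping.lookup ?a i \<noteq> Poly_Mapping.lookup ?b i}"
        using ks' by (auto simp: lookup_single_not_eq)
    qed
    have mx: "Max {k, s} = s" using ks' by simp
    have ne: "?b \<noteq> ?a"
    proof
      assume "?b = ?a"
      then have "Poly_Mapping.lookup ?b s = Poly_Mapping.lookup ?a s" by simp
      then show False using ks' by (simp add: lookup_single_not_eq)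
    qed
    have "Poly_Mapping.lookup ?a s < Poly_Mapping.lookup ?b s" using ks' by (simp add: lookup_single_not_eq)
    then have gl: "grevlex_less ?b ?a" unfolding grevlex_less_def D mx Let_def using ne by (simp add: mdeg_single)
    have ev: "\<forall>i. even (dg ?a i + dg ?b i)" by (simp add: dg_single)
    have ka: "Poly_Mapping.keys ?a \<subseteq> {1..s}" using kk by simp
    have kb: "Poly_Mapping.keys ?b \<subseteq> {1..s}" using s1 by simp
    have md: "mdeg ?a = mdeg ?b" by (simp add: mdeg_single)
    obtain f where "f \<in> Id" "f \<noteq> 0" "is_lead_mon f ?a" using BIN[OF ka kb md ev gl] by blast
    moreover have "mdvd ?a \<gamma>" unfolding mdvd_def
    proof
      fix j show "Poly_Mapping.lookup ?a j \<le> Poly_Mapping.lookup \<gamma> j"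
        using k by (cases "j = k") (simp_all add: lookup_single_not_eq)
    qed
    ultimately show False using nB by blast
  qed
qed

lemma Bset_can:
  assumes g: "\<gamma> \<in> Bset E n s d"
  shows "\<gamma> = ind (Poly_Mapping.keys \<gamma>) \<and> canI (Poly_Mapping.keys \<gamma>) \<and> card (Poly_Mapping.keys \<gamma>) = d"
proof -
  define A where "A = Poly_Mapping.keys \<gamma>"
  have gA: "\<gamma> = ind A" unfolding A_def using Bset_sqfree[OF g] by (rule squarefree_ind)
  have As: "A \<subseteq> {1..s}" using g unfolding Bset_def A_def by auto
  have fA: "finite A" using As finite_sub by auto
  have cA: "card A = d" using g gA mdeg_ind[OF fA] unfolding Bset_def by auto
  have nB: "\<not> (\<exists>f\<in>Id. f \<noteq> 0 \<and> (\<exists>\<mu>. is_lead_mon f \<mu> \<and> mdvd \<mu> \<gamma>))" using g unfolding Bset_def by auto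
  have dv: "mdvd \<gamma> \<gamma>" unfolding mdvd_def by simp
  have no: "\<not> (\<exists>f\<in>Id. f \<noteq> 0 \<and> is_lead_mon f (ind A))" using nB dv gA by blast
  have "canI A" unfolding canI_def
  proof (intro conjI allI impI)
    show "A \<subseteq> {1..s}" by (rule As)
    fix C assume C: "C \<subseteq> {1..s} \<and> C \<noteq> {} \<and> evs C \<and> even (card C)"
    have fC: "finite C" using C finite_sub by auto
    have fsd: "finite (sd A C)" using fA fC unfolding sd_def by auto
    have sds: "sd A C \<subseteq> {1..s}" using As C unfolding sd_def by auto
    have cc: "card A + card C = card (sd A C) + 2 * card (A \<inter> C)" using fA fC by (rule card_sd)
    have evd: "\<forall>i. even (deg A i + deg (sd A C) i)"
    proof
      fix i
      have "deg A i + deg (sd A C) i = deg (sd A (sd A C)) i + 2 * deg (A \<inter> sd A C) i"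
        using fA fsd by (rule deg_sd)
      then show "even (deg A i + deg (sd A C) i)" using C unfolding sd_sd evs_def by simp
    qed
    show le: "2 * card (A \<inter> C) \<le> card C"
    proof (rule ccontr)
      assume "\<not> 2 * card (A \<inter> C) \<le> card C"
      moreover obtain q where q: "card C = 2 * q" using C by (auto elim!: evenE)
      ultimately obtain m where m: "2 * card (A \<inter> C) = card C + 2 * m" "m \<ge> 1"
        by (intro that[of "card (A \<inter> C) - q"]) auto
      define \<beta> where "\<beta> = ind (sd A C) + Poly_Mapping.single s (2 * m)"
      have kb: "Poly_Mapping.keys \<beta> \<subseteq> {1..s}"
      proof -
        have "Poly_Mapping.keys \<beta> \<subseteq> Poly_Mapping.keys (ind (sd A C)) \<union> Poly_Mapping.keys (Poly_Mapping.single s (2 * m))"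
          unfolding \<beta>_def by (rule keys_add)
        moreover have "Poly_Mapping.keys (Poly_Mapping.single s (2 * m)) \<subseteq> {1..s}" using s1 by simp
        moreover have "Poly_Mapping.keys (ind (sd A C)) \<subseteq> {1..s}" using keys_ind[OF fsd] sds by simp
        ultimately show ?thesis by blast
      qed
      have mb: "mdeg (ind A) = mdeg \<beta>" unfolding \<beta>_def mdeg_add mdeg_single using mdeg_ind[OF fA] mdeg_ind[OF fsd] cc m by simp
      have eb: "\<forall>i. even (dg (ind A) i + dg \<beta> i)" unfolding \<beta>_def dg_add dg_single using evd dg_ind fA fsd by simp
      have D: "{i. Poly_Mapping.lookup (ind A) i \<noteq> Poly_Mapping.lookup \<beta> i} \<subseteq> {1..s}"
        using max_diff[OF _ kb] keys_ind[OF fA] As by auto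
      have ls: "Poly_Mapping.lookup (ind A) s < Poly_Mapping.lookup \<beta> s"
        unfolding \<beta>_def using m by (simp add: lookup_add lookup_ind[OF fA] lookup_ind[OF fsd])
      have sD: "s \<in> {i. Poly_Mapping.lookup (ind A) i \<noteq> Poly_Mapping.lookup \<beta> i}" using ls by auto
      have "Max {i. Poly_Mapping.lookup (ind A) i \<noteq> Poly_Mapping.lookup \<beta> i} = s"
        using D sD by (intro Max_eqI) (auto intro: finite_subset)
      then have "grevlex_less \<beta> (ind A)" unfolding grevlex_less_def using mb ls by (auto simp: Let_def)
      then show False using BIN[OF _ kb mb eb] no keys_ind[OF fA] As by blast
    qed
    assume eq: "2 * card (A \<inter> C) = card C"
    show "Max C \<in> A"
    proof (rule ccontr)
      assume nm: "Max C \<notin> A"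
      define \<beta> where "\<beta> = ind (sd A C)"
      have kb: "Poly_Mapping.keys \<beta> \<subseteq> {1..s}" unfolding \<beta>_def using keys_ind[OF fsd] sds by auto
      have mb: "mdeg (ind A) = mdeg \<beta>" unfolding \<beta>_def using mdeg_ind[OF fA] mdeg_ind[OF fsd] cc eq by simp
      have eb: "\<forall>i. even (dg (ind A) i + dg \<beta> i)" unfolding \<beta>_def using evd dg_ind fA fsd by simp
      have D: "{i. Poly_Mapping.lookup (ind A) i \<noteq> Poly_Mapping.lookup \<beta> i} = C"
        unfolding \<beta>_def using lookup_ind[OF fA] lookup_ind[OF fsd] unfolding sd_def by auto
      have mC: "Max C \<in> C" using C fC by auto
      have "Poly_Mapping.lookup (ind A) (Max C) < Poly_Mapping.lookup \<beta> (Max C)"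
        unfolding \<beta>_def using nm mC lookup_ind[OF fA] lookup_ind[OF fsd] unfolding sd_def by auto
      then have "grevlex_less \<beta> (ind A)" unfolding grevlex_less_def D using mb by (auto simp: Let_def)
      then show False using BIN[OF _ kb mb eb] no keys_ind[OF fA] As by blast
    qed
  qed
  then show ?thesis using gA cA unfolding A_def by simp
qed

end



lemma poly_repr: "p = (\<Sum>\<alpha>\<in>Poly_Mapping.keys p. Poly_Mapping.single \<alpha> (Poly_Mapping.lookup p \<alpha>))"
proof (rule poly_mapping_eqI)
  fix k
  have "Poly_Mapping.lookup (\<Sum>\<alpha>\<in>Poly_Mapping.keys p. Poly_Mapping.single \<alpha> (Poly_Mapping.lookup p \<alpha>)) k
      = (\<Sum>\<alpha>\<in>Poly_Mapping.keys p. if \<alpha> = k then Poly_Mapping.lookup p \<alpha> else 0)"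
    unfolding lookup_sum lookup_single by (simp add: when_def)
  also have "\<dots> = Poly_Mapping.lookup p k" by (simp add: in_keys_iff)
  finally show "Poly_Mapping.lookup p k = Poly_Mapping.lookup (\<Sum>\<alpha>\<in>Poly_Mapping.keys p. Poly_Mapping.single \<alpha> (Poly_Mapping.lookup p \<alpha>)) k" by simp
qed

lemma card_split: "finite A \<Longrightarrow> card A = card (A - B) + card (A \<inter> B)"
proof -
  assume f: "finite A"
  have e1: "A = (A - B) \<union> (A \<inter> B)" by auto
  show ?thesis using f by (subst e1, intro card_Un_disjoint) auto
qed

definition LamG :: "(mon \<Rightarrow> K) \<Rightarrow> pol \<Rightarrow> K" where
  "LamG l g = (\<Sum>\<gamma>\<in>Poly_Mapping.keys g. Poly_Mapping.lookup g \<gamma> * l \<gamma>)"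

lemma LamG_super: "finite S \<Longrightarrow> Poly_Mapping.keys g \<subseteq> S \<Longrightarrow> LamG l g = (\<Sum>\<gamma>\<in>S. Poly_Mapping.lookup g \<gamma> * l \<gamma>)"
  unfolding LamG_def by (intro sum.mono_neutral_left) (auto simp: in_keys_iff)

lemma LamG_add: "LamG l (f + g) = LamG l f + LamG l g"
proof -
  let ?S = "Poly_Mapping.keys f \<union> Poly_Mapping.keys g"
  have "LamG l (f + g) = (\<Sum>\<gamma>\<in>?S. Poly_Mapping.lookup (f + g) \<gamma> * l \<gamma>)"
    using keys_add[of f g] by (intro LamG_super) auto
  also have "\<dots> = (\<Sum>\<gamma>\<in>?S. Poly_Mapping.lookup f \<gamma> * l \<gamma>) + (\<Sum>\<gamma>\<in>?S. Poly_Mapping.lookup g \<gamma> * l \<gamma>)"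
    by (simp add: lookup_add distrib_right sum.distrib)
  also have "\<dots> = LamG l f + LamG l g"
    using LamG_super[of ?S f l] LamG_super[of ?S g l] by simp
  finally show ?thesis .
qed

lemma LamG_zero: "LamG l 0 = 0" unfolding LamG_def by simp

lemma LamG_sum: "finite F \<Longrightarrow> LamG l (\<Sum>i\<in>F. h i) = (\<Sum>i\<in>F. LamG l (h i))"
  by (induction F rule: finite_induct) (auto simp: LamG_zero LamG_add)

lemma LamG_single: "LamG l (Poly_Mapping.single \<gamma> c) = c * l \<gamma>"
  unfolding LamG_def by auto

lemma LamG_mult: "LamG l (a * g) = (\<Sum>\<alpha>\<in>Poly_Mapping.keys a. Poly_Mapping.lookup a \<alpha> * (\<Sum>\<beta>\<in>Poly_Mapping.keys g. Poly_Mapping.lookup g \<beta> * l (\<alpha> + \<beta>)))"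
proof -
  have "a * g = (\<Sum>\<alpha>\<in>Poly_Mapping.keys a. Poly_Mapping.single \<alpha> (Poly_Mapping.lookup a \<alpha>)) * (\<Sum>\<beta>\<in>Poly_Mapping.keys g. Poly_Mapping.single \<beta> (Poly_Mapping.lookup g \<beta>))"
    using poly_repr[of a] poly_repr[of g] by simp
  also have "\<dots> = (\<Sum>\<alpha>\<in>Poly_Mapping.keys a. \<Sum>\<beta>\<in>Poly_Mapping.keys g. Poly_Mapping.single (\<alpha> + \<beta>) (Poly_Mapping.lookup a \<alpha> * Poly_Mapping.lookup g \<beta>))"
    by (simp add: sum_product mult_single)
  finally have "LamG l (a * g) = (\<Sum>\<alpha>\<in>Poly_Mapping.keys a. \<Sum>\<beta>\<in>Poly_Mapping.keys g. (Poly_Mapping.lookup a \<alpha> * Poly_Mapping.lookup g \<beta>) * l (\<alpha> + \<beta>))"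
    by (simp add: LamG_sum LamG_single)
  then show ?thesis by (simp add: sum_distrib_left mult.assoc)
qed

definition Kil :: "(mon \<Rightarrow> K) \<Rightarrow> pol set" where "Kil l = {g. \<forall>a. LamG l (a * g) = 0}"

lemma Kil_ideal: "Gs \<subseteq> Kil l \<Longrightarrow> ideal_gen s Gs \<subseteq> Kil l"
proof
  fix f assume Gs: "Gs \<subseteq> Kil l" and f: "f \<in> ideal_gen s Gs"
  then obtain F c where F: "finite F" "F \<subseteq> Gs" and fe: "f = (\<Sum>g\<in>F. c g * g)" unfolding ideal_gen_def by blast
  show "f \<in> Kil l" unfolding Kil_def
  proof (intro CollectI allI)
    fix b
    have "b * f = (\<Sum>g\<in>F. (b * c g) * g)" unfolding fe by (simp add: sum_distrib_left mult.assoc)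
    then have "LamG l (b * f) = (\<Sum>g\<in>F. LamG l ((b * c g) * g))" using F by (simp add: LamG_sum)
    also have "\<dots> = 0" using F Gs unfolding Kil_def by (intro sum.neutral) blast
    finally show "LamG l (b * f) = 0" .
  qed
qed

context G begin

definition lam :: "nat set \<Rightarrow> mon \<Rightarrow> K" where
  "lam B \<gamma> = (if Poly_Mapping.keys \<gamma> \<subseteq> {1..s} \<and> mdeg \<gamma> = card B \<and> (\<forall>i. even (dg \<gamma> i + deg B i)) then 1 else 0)"

lemma LSTAR:
  assumes cB: "canI B" and ks: "Poly_Mapping.keys \<gamma> \<subseteq> {1..s}" and md: "mdeg \<gamma> = card B"
    and ev: "\<forall>i. even (dg \<gamma> i + deg B i)"
  shows "\<gamma> = ind (oddset \<gamma>) \<and> card (oddset \<gamma>) = card B \<and> rel (oddset \<gamma>) B"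
proof -
  let ?Ob = "oddset \<gamma>"
  have Os: "?Ob \<subseteq> {1..s}" using ks unfolding oddset_def by auto
  have "\<forall>i. even (deg ?Ob i + deg B i)" using ev dg_parity by (simp add: even_add)
  moreover have "even (card ?Ob + card B)" using oddset_parity[of \<gamma>] md by (simp add: even_add)
  ultimately have r: "rel ?Ob B" unfolding rel_def by simp
  have "card B \<le> card ?Ob" using can_min[OF cB Os rel_sym[OF r]] .
  moreover have oc: "card ?Ob \<le> mdeg \<gamma> \<and> (card ?Ob = mdeg \<gamma> \<longrightarrow> (\<forall>k. Poly_Mapping.lookup \<gamma> k \<le> 1))" by (rule oddset_card)
  ultimately have eq: "card ?Ob = card B" using md by simp
  then have sq: "\<forall>k. Poly_Mapping.lookup \<gamma> k \<le> 1" using oc md by simp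
  then have g: "\<gamma> = ind (Poly_Mapping.keys \<gamma>)" by (rule squarefree_ind)
  have "Poly_Mapping.keys \<gamma> = ?Ob" unfolding oddset_def
  proof (intro equalityI subsetI)
    fix k assume k: "k \<in> Poly_Mapping.keys \<gamma>"
    then have "Poly_Mapping.lookup \<gamma> k = 1" using sq[rule_format, of k] by (auto simp: in_keys_iff)
    then show "k \<in> {k \<in> Poly_Mapping.keys \<gamma>. odd (Poly_Mapping.lookup \<gamma> k)}" using k by simp
  qed auto
  then show ?thesis using g eq r by simp
qed

lemma Kil_ts: "canI B \<Longrightarrow> tvar s ^ 2 \<in> Kil (lam B)"
  unfolding Kil_def
proof (intro CollectI allI)
  fix a assume cB: "canI B"
  have "lam B (\<alpha> + Poly_Mapping.single s 2) = 0" for \<alpha>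
  proof (rule ccontr)
    let ?g = "\<alpha> + Poly_Mapping.single s 2"
    assume "lam B ?g \<noteq> 0"
    then have c: "Poly_Mapping.keys ?g \<subseteq> {1..s}" "mdeg ?g = card B" "\<forall>i. even (dg ?g i + deg B i)"
      unfolding lam_def by (auto split: if_splits)
    have eqO: "?g = ind (oddset ?g)" using LSTAR[OF cB c] by blast
    have "oddset ?g \<subseteq> {1..s}" using c(1) unfolding oddset_def by auto
    then have fO: "finite (oddset ?g)" by (rule finite_sub)
    obtain Ob where Ob: "?g = ind Ob" "finite Ob" using eqO fO by blast
    have "Poly_Mapping.lookup ?g s = Poly_Mapping.lookup (ind Ob) s" using Ob(1) by simp
    also have "\<dots> \<le> 1" using lookup_ind[OF Ob(2)] by simp
    finally have "Poly_Mapping.lookup ?g s \<le> 1" .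
    moreover have "Poly_Mapping.lookup ?g s \<ge> 2" by (simp add: lookup_add)
    ultimately show False by simp
  qed
  then show "LamG (lam B) (a * tvar s ^ 2) = 0" unfolding tvar_sq LamG_mult by simp
qed

lemma Kil_G0:
  assumes cB: "canI B" and g: "inS s g" "homog e g" "\<forall>P\<in>Xset E n s. \<forall>v\<in>P. peval g v = 0"
  shows "g \<in> Kil (lam B)"
  unfolding Kil_def
proof (intro CollectI allI)
  fix a
  have inner: "(\<Sum>\<beta>\<in>Poly_Mapping.keys g. Poly_Mapping.lookup g \<beta> * lam B (\<alpha> + \<beta>)) = 0" for \<alpha>
  proof (cases "Poly_Mapping.keys \<alpha> \<subseteq> {1..s} \<and> mdeg \<alpha> + e = card B")
    case False
    have "lam B (\<alpha> + \<beta>) = 0" if \<beta>: "\<beta> \<in> Poly_Mapping.keys g" for \<beta>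
    proof -
      have "mdeg \<beta> = e" using g(2) \<beta> unfolding homog_def by auto
      moreover have "Poly_Mapping.keys \<alpha> \<subseteq> Poly_Mapping.keys (\<alpha> + \<beta>)" by (auto simp: in_keys_iff lookup_add)
      ultimately show ?thesis using False unfolding lam_def by (auto simp: mdeg_add)
    qed
    then show ?thesis by simp
  next
    case True
    have kb: "\<And>\<beta>. \<beta> \<in> Poly_Mapping.keys g \<Longrightarrow> Poly_Mapping.keys \<beta> \<subseteq> {1..s}" using g(1) unfolding inS_def by auto
    have kab: "Poly_Mapping.keys (\<alpha> + \<beta>) \<subseteq> {1..s}" if \<beta>: "\<beta> \<in> Poly_Mapping.keys g" for \<beta>
    proof -
      have "Poly_Mapping.keys (\<alpha> + \<beta>) \<subseteq> Poly_Mapping.keys \<alpha> \<union> Poly_Mapping.keys \<beta>" by (rule keys_add)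
      then show ?thesis using True kb[OF \<beta>] by blast
    qed
    have kB: "Poly_Mapping.keys (ind B) \<subseteq> {1..s}" using cB keys_ind finite_sub unfolding canI_def by auto
    have fB: "finite B" using cB finite_sub unfolding canI_def by auto
    have lamv: "lam B (\<alpha> + \<beta>) = (if \<forall>i. even (dg (\<alpha> + \<beta>) i + dg (ind B) i) then 1 else 0)" if \<beta>: "\<beta> \<in> Poly_Mapping.keys g" for \<beta>
    proof -
      have "mdeg \<beta> = e" using g(2) \<beta> unfolding homog_def by auto
      then show ?thesis unfolding lam_def using kab[OF \<beta>] True by (simp add: mdeg_add dg_ind[OF fB])
    qed
    have "(2::K) ^ n * (\<Sum>\<beta>\<in>Poly_Mapping.keys g. Poly_Mapping.lookup g \<beta> * lam B (\<alpha> + \<beta>))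
        = (\<Sum>\<beta>\<in>Poly_Mapping.keys g. Poly_Mapping.lookup g \<beta> * (if \<forall>i. even (dg (\<alpha> + \<beta>) i + dg (ind B) i) then 2 ^ n else 0))"
      unfolding sum_distrib_left by (intro sum.cong refl) (simp add: lamv)
    also have "\<dots> = (\<Sum>\<beta>\<in>Poly_Mapping.keys g. Poly_Mapping.lookup g \<beta> * (\<Sum>x\<in>Sg. pv (\<alpha> + \<beta>) (tw x) * pv (ind B) (tw x)))"
      using ORTH[OF kab kB] by simp
    also have "\<dots> = (\<Sum>\<beta>\<in>Poly_Mapping.keys g. \<Sum>x\<in>Sg. pv \<alpha> (tw x) * pv (ind B) (tw x) * (Poly_Mapping.lookup g \<beta> * pv \<beta> (tw x)))"
      unfolding sum_distrib_left by (intro sum.cong refl) (simp add: pv_add mult_ac)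
    also have "\<dots> = (\<Sum>x\<in>Sg. \<Sum>\<beta>\<in>Poly_Mapping.keys g. pv \<alpha> (tw x) * pv (ind B) (tw x) * (Poly_Mapping.lookup g \<beta> * pv \<beta> (tw x)))"
      by (rule sum.swap)
    also have "\<dots> = (\<Sum>x\<in>Sg. pv \<alpha> (tw x) * pv (ind B) (tw x) * (\<Sum>\<beta>\<in>Poly_Mapping.keys g. Poly_Mapping.lookup g \<beta> * pv \<beta> (tw x)))"
      by (simp only: sum_distrib_left)
    also have "\<dots> = (\<Sum>x\<in>Sg. pv \<alpha> (tw x) * pv (ind B) (tw x) * peval g (tw x))"
      by (simp add: peval_pv)
    also have "\<dots> = 0" using g(3) Sg_X by (intro sum.neutral) auto
    finally show ?thesis using K_two by simp
  qed
  show "LamG (lam B) (a * g) = 0" unfolding LamG_mult using inner by simp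
qed

lemma Id_Kil: "canI B \<Longrightarrow> Id \<subseteq> Kil (lam B)"
proof -
  assume cB: "canI B"
  have "IX E n s \<subseteq> Kil (lam B)" unfolding IX_def using Kil_G0[OF cB] by (intro Kil_ideal) blast
  then show ?thesis using Kil_ts[OF cB] by (intro Kil_ideal) blast
qed

lemma can_Bset:
  assumes cA: "canI A" and cd: "card A = d"
  shows "ind A \<in> Bset E n s d"
proof -
  have As: "A \<subseteq> {1..s}" using cA unfolding canI_def by auto
  have fA: "finite A" using As finite_sub by auto
  have "\<not> (f \<in> Id \<and> f \<noteq> 0 \<and> is_lead_mon f \<mu> \<and> mdvd \<mu> (ind A))" for f \<mu>
  proof
    assume h: "f \<in> Id \<and> f \<noteq> 0 \<and> is_lead_mon f \<mu> \<and> mdvd \<mu> (ind A)"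
    define B where "B = Poly_Mapping.keys \<mu>"
    have le1: "\<forall>k. Poly_Mapping.lookup \<mu> k \<le> Poly_Mapping.lookup (ind A) k" using h unfolding mdvd_def by auto
    have BA: "B \<subseteq> A"
    proof
      fix k assume "k \<in> B"
      then have "Poly_Mapping.lookup \<mu> k \<noteq> 0" unfolding B_def by (simp add: in_keys_iff)
      then have "Poly_Mapping.lookup (ind A) k \<noteq> 0" using le1[rule_format, of k] by linarith
      then show "k \<in> A" using lookup_ind[OF fA, of k] by (simp split: if_splits)
    qed
    have sq: "\<forall>k. Poly_Mapping.lookup \<mu> k \<le> 1"
    proof
      fix k
      have "Poly_Mapping.lookup (ind A) k \<le> 1" using lookup_ind[OF fA, of k] by simp
      then show "Poly_Mapping.lookup \<mu> k \<le> 1" using le1[rule_format, of k] by linarith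
    qed
    have mu: "\<mu> = ind B" unfolding B_def using sq by (rule squarefree_ind)
    have cB: "canI B" using can_subset[OF cA BA] .
    have fB: "finite B" using BA fA finite_subset by auto
    have Bs: "B \<subseteq> {1..s}" using BA As by auto
    have "f \<in> Kil (lam B)" using Id_Kil[OF cB] h by blast
    then have "LamG (lam B) (1 * f) = 0" unfolding Kil_def by blast
    then have lf: "LamG (lam B) f = 0" by simp
    have mk: "\<mu> \<in> Poly_Mapping.keys f" using h unfolding is_lead_mon_def by auto
    have other: "lam B \<gamma> = 0" if \<gamma>: "\<gamma> \<in> Poly_Mapping.keys f" "\<gamma> \<noteq> \<mu>" for \<gamma>
    proof (rule ccontr)
      assume "lam B \<gamma> \<noteq> 0"
      then have c: "Poly_Mapping.keys \<gamma> \<subseteq> {1..s}" "mdeg \<gamma> = card B" "\<forall>i. even (dg \<gamma> i + deg B i)"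
        unfolding lam_def by (auto split: if_splits)
      define Ob where "Ob = oddset \<gamma>"
      have L: "\<gamma> = ind Ob" "card Ob = card B" "rel Ob B" using LSTAR[OF cB c] unfolding Ob_def by auto
      have Os: "Ob \<subseteq> {1..s}" using c(1) unfolding Ob_def oddset_def by auto
      have fO: "finite Ob" using Os finite_sub by auto
      have OB: "Ob \<noteq> B" using L(1) mu \<gamma>(2) by auto
      define C where "C = sd B Ob"
      have Cs: "C \<subseteq> {1..s}" using Os Bs unfolding C_def sd_def by auto
      have Cne: "C \<noteq> {}" using OB unfolding C_def sd_def by auto
      have Cev: "evs C" unfolding C_def using evs_sd[OF fB fO] rel_sym[OF L(3)] unfolding rel_def by simp
      have cs: "card C = card (B - Ob) + card (Ob - B)" unfolding C_def sd_def using fB fO by (intro card_Un_disjoint) auto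
      have "card B = card (B - Ob) + card (B \<inter> Ob)" using card_split[OF fB] .
      moreover have "card Ob = card (Ob - B) + card (B \<inter> Ob)" using card_split[OF fO, of B] by (simp add: Int_commute)
      ultimately have eqd: "card (B - Ob) = card (Ob - B)" using L(2) by simp
      have BC: "B \<inter> C = B - Ob" unfolding C_def sd_def by auto
      have Cc: "even (card C)" using cs eqd by simp
      have "2 * card (B \<inter> C) = card C" using BC cs eqd by simp
      then have mB: "Max C \<in> B" using cB Cs Cne Cev Cc unfolding canI_def by blast
      have gl: "grevlex_less \<gamma> \<mu>" using h \<gamma> unfolding is_lead_mon_def by auto
      have D: "{i. Poly_Mapping.lookup \<mu> i \<noteq> Poly_Mapping.lookup \<gamma> i} = C"
        unfolding mu L(1) C_def sd_def using lookup_ind[OF fB] lookup_ind[OF fO] by auto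
      have md: "mdeg \<gamma> = mdeg \<mu>" using c(2) mu mdeg_ind[OF fB] by simp
      have "Poly_Mapping.lookup \<mu> (Max C) < Poly_Mapping.lookup \<gamma> (Max C)"
        using gl md unfolding grevlex_less_def D by (auto simp: Let_def)
      then have "Poly_Mapping.lookup (ind B) (Max C) < Poly_Mapping.lookup (ind Ob) (Max C)" using L(1) mu by simp
      then show False using mB lookup_ind[OF fB, of "Max C"] lookup_ind[OF fO, of "Max C"] by (simp split: if_splits)
    qed
    have lm: "lam B \<mu> = 1" unfolding lam_def mu using keys_ind[OF fB] Bs mdeg_ind[OF fB] dg_ind[OF fB] by simp
    have "LamG (lam B) f = Poly_Mapping.lookup f \<mu> * lam B \<mu> + (\<Sum>\<gamma>\<in>Poly_Mapping.keys f - {\<mu>}. Poly_Mapping.lookup f \<gamma> * lam B \<gamma>)"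
      unfolding LamG_def using mk by (intro sum.remove) auto
    moreover have "(\<Sum>\<gamma>\<in>Poly_Mapping.keys f - {\<mu>}. Poly_Mapping.lookup f \<gamma> * lam B \<gamma>) = 0"
      using other by (intro sum.neutral) auto
    ultimately have "LamG (lam B) f = Poly_Mapping.lookup f \<mu> * lam B \<mu>" by simp
    then have "LamG (lam B) f = Poly_Mapping.lookup f \<mu>" using lm by simp
    moreover have "Poly_Mapping.lookup f \<mu> \<noteq> 0" using mk by (simp add: in_keys_iff)
    ultimately show False using lf by simp
  qed
  moreover have "Poly_Mapping.keys (ind A) \<subseteq> {1..s}" using keys_ind[OF fA] As by simp
  moreover have "mdeg (ind A) = d" using mdeg_ind[OF fA] cd by simp
  ultimately show ?thesis unfolding Bset_def by blast
qed

end



interpretation FS: vector_space fscale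
  by unfold_locales (auto simp: fscale_def fun_eq_iff algebra_simps)

lemma sum_fun_apply: "(\<Sum>t\<in>T. h t) P = (\<Sum>t\<in>T. (h t) P)"
proof (cases "finite T")
  case True then show ?thesis by (induction T rule: finite_induct) auto
next
  case False then show ?thesis by simp
qed

lemma par3: "even (x::nat) \<Longrightarrow> x = y + e + 2 * f \<Longrightarrow> even e \<Longrightarrow> even y" by presburger

lemma fscale_apply: "fscale c w P = c * w P" unfolding fscale_def by simp

context G begin

definition mon :: "nat \<Rightarrow> nat set \<Rightarrow> mon" where
  "mon d A = ind A + Poly_Mapping.single s (d - card A)"

definition Vg :: "nat \<Rightarrow> mon \<Rightarrow> (nat \<Rightarrow> K) set \<Rightarrow> K" where
  "Vg d \<gamma> = codeword E n s d (Poly_Mapping.single \<gamma> 1)"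

definition Can :: "nat \<Rightarrow> nat set set" where
  "Can d = {A. canI A \<and> card A \<le> d \<and> even (d - card A)}"

lemma peval_single: "peval (Poly_Mapping.single \<gamma> 1) v = pv \<gamma> v"
  unfolding peval_pv by simp

lemma Xset_ne: "P \<in> Xset E n s \<Longrightarrow> (SOME v. v \<in> P) \<in> P"
proof -
  assume "P \<in> Xset E n s"
  then obtain x where "P = pclass (tw x)" unfolding Xset_def by blast
  then have "tw x \<in> P" unfolding pclass_def by (auto intro!: exI[of _ 1])
  then show ?thesis using someI[of "\<lambda>v. v \<in> P" "tw x"] by blast
qed

lemma codeword_sum: "codeword E n s d f = (\<Sum>\<gamma>\<in>Poly_Mapping.keys f. fscale (Poly_Mapping.lookup f \<gamma>) (Vg d \<gamma>))"
proof (rule ext)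
  fix P
  show "codeword E n s d f P = (\<Sum>\<gamma>\<in>Poly_Mapping.keys f. fscale (Poly_Mapping.lookup f \<gamma>) (Vg d \<gamma>)) P"
    unfolding sum_fun_apply fscale_apply Vg_def codeword_def peval_single
    by (simp add: peval_pv sum_divide_distrib)
qed

lemma Vg_eq:
  assumes ks: "Poly_Mapping.keys \<gamma> \<subseteq> {1..s}" "Poly_Mapping.keys \<delta> \<subseteq> {1..s}"
    and md: "mdeg \<gamma> = mdeg \<delta>" and ev: "\<forall>i. even (dg \<gamma> i + dg \<delta> i)"
  shows "Vg d \<gamma> = Vg d \<delta>"
proof (rule ext)
  fix P
  show "Vg d \<gamma> P = Vg d \<delta> P"
  proof (cases "P \<in> Xset E n s")
    case True
    have "pv \<gamma> (SOME v. v \<in> P) = pv \<delta> (SOME v. v \<in> P)" by (rule EVAL[OF ks md ev True Xset_ne[OF True]])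
    then show ?thesis unfolding Vg_def codeword_def peval_single by simp
  next
    case False then show ?thesis unfolding Vg_def codeword_def by simp
  qed
qed

lemma tw1_nz: "\<forall>i\<in>{1..n}. x i \<noteq> 0 \<Longrightarrow> tw x 1 \<noteq> 0"
proof -
  assume x: "\<forall>i\<in>{1..n}. x i \<noteq> 0"
  have c2: "E 1 \<subseteq> {1..n}" "card (E 1) = 2" using Ek s1 by auto
  then have "finite (E 1)" using card_gt_0_iff by fastforce
  note c2 this
  then have "(\<Prod>i\<in>E 1. x i) \<noteq> 0" using x by (subst prod_zero_iff) auto
  then show ?thesis unfolding torus_image_def using s1 by simp
qed

lemma Vg_Sg:
  assumes x: "x \<in> Sg" and ks: "Poly_Mapping.keys \<gamma> \<subseteq> {1..s}" and md: "mdeg \<gamma> = d"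
  shows "Vg d \<gamma> (pclass (tw x)) = pv (\<gamma> + Poly_Mapping.single 1 d) (tw x)"
proof -
  let ?P = "pclass (tw x)"
  have P: "?P \<in> Xset E n s" using Sg_X[OF x] by blast
  define v where "v = (SOME v. v \<in> ?P)"
  have "v \<in> ?P" unfolding v_def using Xset_ne[OF P] .
  then obtain c where c: "c \<noteq> 0" "v = (\<lambda>k. c * tw x k)" unfolding pclass_def by blast
  let ?w = "tw x 1"
  have w0: "?w \<noteq> 0" using tw1_nz Sg_nz[OF x] by blast
  have wsq: "?w ^ d * ?w ^ d = 1" using K_sq[OF w0] by (metis power_mult_distrib power_one power2_eq_square power_mult mult.commute)
  have "Vg d \<gamma> ?P = pv \<gamma> v / v 1 ^ d" unfolding Vg_def codeword_def peval_single v_def using P by simp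
  also have "\<dots> = (c ^ d * pv \<gamma> (tw x)) / (c ^ d * ?w ^ d)" unfolding c(2) pv_scale md by (simp add: power_mult_distrib)
  also have "\<dots> = pv \<gamma> (tw x) / ?w ^ d" using c(1) by simp
  also have "\<dots> = pv \<gamma> (tw x) * ?w ^ d" using wsq w0 by (simp add: field_simps)
  also have "\<dots> = pv (\<gamma> + Poly_Mapping.single 1 d) (tw x)" by (simp add: pv_add pv_single1)
  finally show ?thesis .
qed

lemma finite_Can: "finite (Can d)"
proof -
  have "Can d \<subseteq> Pow {1..s}" unfolding Can_def canI_def by auto
  then show ?thesis by (rule finite_subset) simp
qed

lemma Can_fin: "A \<in> Can d \<Longrightarrow> finite A \<and> A \<subseteq> {1..s} \<and> canI A"
  unfolding Can_def canI_def using finite_sub by auto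

lemma mon_keys: "A \<in> Can d \<Longrightarrow> Poly_Mapping.keys (mon d A) \<subseteq> {1..s}"
proof -
  assume A: "A \<in> Can d"
  have "Poly_Mapping.keys (mon d A) \<subseteq> Poly_Mapping.keys (ind A) \<union> Poly_Mapping.keys (Poly_Mapping.single s (d - card A))"
    unfolding mon_def by (rule keys_add)
  moreover have "Poly_Mapping.keys (Poly_Mapping.single s (d - card A)) \<subseteq> {1..s}" using s1 by simp
  moreover have "Poly_Mapping.keys (ind A) \<subseteq> {1..s}" using Can_fin[OF A] keys_ind by auto
  ultimately show ?thesis by blast
qed

lemma mon_mdeg: "A \<in> Can d \<Longrightarrow> mdeg (mon d A) = d"
proof -
  assume A: "A \<in> Can d"
  have f: "finite A" using Can_fin[OF A] by blast
  have c: "card A \<le> d" using A unfolding Can_def by blast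
  have "mdeg (mon d A) = card A + (d - card A)" unfolding mon_def mdeg_add mdeg_single mdeg_ind[OF f] ..
  then show ?thesis using c by simp
qed

lemma mon_dg: "A \<in> Can d \<Longrightarrow> dg (mon d A) i = deg A i + (if i \<in> E s then d - card A else 0)"
proof -
  assume A: "A \<in> Can d"
  have f: "finite A" using Can_fin[OF A] by blast
  show ?thesis unfolding mon_def dg_add dg_single dg_ind[OF f] ..
qed

lemma INDEP:
  assumes T: "T \<subseteq> Can d" and sm: "(\<Sum>A\<in>T. fscale (c A) (Vg d (mon d A))) = 0" and A0: "A0 \<in> T"
  shows "c A0 = 0"
proof -
  have fT: "finite T" using T finite_Can finite_subset by blast
  let ?nu = "\<lambda>A. mon d A + Poly_Mapping.single 1 d"
  have knu: "Poly_Mapping.keys (?nu A) \<subseteq> {1..s}" if "A \<in> Can d" for A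
  proof -
    have "Poly_Mapping.keys (?nu A) \<subseteq> Poly_Mapping.keys (mon d A) \<union> Poly_Mapping.keys (Poly_Mapping.single 1 d)" by (rule keys_add)
    moreover have "Poly_Mapping.keys (Poly_Mapping.single 1 d) \<subseteq> {1..s}" using s1 by simp
    ultimately show ?thesis using mon_keys[OF that] by blast
  qed
  have pt: "(\<Sum>A\<in>T. c A * pv (?nu A) (tw x)) = 0" if x: "x \<in> Sg" for x
  proof -
    have "(\<Sum>A\<in>T. fscale (c A) (Vg d (mon d A))) (pclass (tw x)) = 0" using sm by simp
    then have "(\<Sum>A\<in>T. c A * Vg d (mon d A) (pclass (tw x))) = 0" unfolding sum_fun_apply fscale_apply .
    moreover have "Vg d (mon d A) (pclass (tw x)) = pv (?nu A) (tw x)" if "A \<in> T" for A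
      using Vg_Sg[OF x mon_keys mon_mdeg] that T by blast
    ultimately show ?thesis by simp
  qed
  have ev: "(\<forall>i. even (dg (?nu A0) i + dg (?nu A) i)) \<longleftrightarrow> A = A0" if A: "A \<in> T" for A
  proof
    assume h: "\<forall>i. even (dg (?nu A0) i + dg (?nu A) i)"
    have cA: "A \<in> Can d" "A0 \<in> Can d" using A A0 T by auto
    have "even (deg A0 i + deg A i)" for i
    proof -
      have "even (dg (?nu A0) i + dg (?nu A) i)" using h by blast
      moreover have "dg (?nu A0) i + dg (?nu A) i = deg A0 i + deg A i + ((if i \<in> E s then d - card A0 else 0) + (if i \<in> E s then d - card A else 0)) + 2 * (if i \<in> E 1 then d else 0)"
        unfolding dg_add mon_dg[OF cA(1)] mon_dg[OF cA(2)] dg_single by simp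
      moreover have "even ((if i \<in> E s then d - card A0 else 0) + (if i \<in> E s then d - card A else 0))"
        using cA unfolding Can_def by auto
      ultimately show ?thesis by (rule par3)
    qed
    moreover have "even (card A0 + card A)" using cA unfolding Can_def by (auto simp: even_add)
    ultimately have "rel A0 A" unfolding rel_def by blast
    then show "A = A0" using can_unique Can_fin cA by metis
  next
    assume "A = A0"
    then show "\<forall>i. even (dg (?nu A0) i + dg (?nu A) i)" by simp
  qed
  have "0 = (\<Sum>x\<in>Sg. pv (?nu A0) (tw x) * (\<Sum>A\<in>T. c A * pv (?nu A) (tw x)))" using pt by simp
  also have "\<dots> = (\<Sum>x\<in>Sg. \<Sum>A\<in>T. c A * (pv (?nu A0) (tw x) * pv (?nu A) (tw x)))"
    unfolding sum_distrib_left by (intro sum.cong refl) (simp add: mult_ac)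
  also have "\<dots> = (\<Sum>A\<in>T. \<Sum>x\<in>Sg. c A * (pv (?nu A0) (tw x) * pv (?nu A) (tw x)))" by (rule sum.swap)
  also have "\<dots> = (\<Sum>A\<in>T. c A * (if A = A0 then 2 ^ n else 0))"
  proof (intro sum.cong refl)
    fix A assume A: "A \<in> T"
    have "(\<Sum>x\<in>Sg. c A * (pv (?nu A0) (tw x) * pv (?nu A) (tw x))) = c A * (\<Sum>x\<in>Sg. pv (?nu A0) (tw x) * pv (?nu A) (tw x))"
      by (simp add: sum_distrib_left)
    also have "\<dots> = c A * (if A = A0 then 2 ^ n else 0)"
    proof -
      have cc: "A \<in> Can d" "A0 \<in> Can d" using A A0 T by auto
      have o: "(\<Sum>x\<in>Sg. pv (?nu A0) (tw x) * pv (?nu A) (tw x)) = (if \<forall>i. even (dg (?nu A0) i + dg (?nu A) i) then 2 ^ n else 0)"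
        by (rule ORTH[OF knu[OF cc(2)] knu[OF cc(1)]])
      show ?thesis unfolding o ev[OF A] ..
    qed
    finally show "(\<Sum>x\<in>Sg. c A * (pv (?nu A0) (tw x) * pv (?nu A) (tw x))) = c A * (if A = A0 then 2 ^ n else 0)" .
  qed
  also have "\<dots> = c A0 * 2 ^ n" using fT A0 by (simp add: if_distrib sum.delta' cong: if_cong)
  finally have "c A0 * 2 ^ n = 0" by simp
  then show ?thesis using K_two by simp
qed

abbreviation Bas where "Bas d \<equiv> (\<lambda>A. Vg d (mon d A)) ` Can d"

lemma inj_Bas: "inj_on (\<lambda>A. Vg d (mon d A)) (Can d)"
proof (rule inj_onI, rule ccontr)
  fix A A' assume A: "A \<in> Can d" "A' \<in> Can d" and eq: "Vg d (mon d A) = Vg d (mon d A')" and ne: "A \<noteq> A'"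
  let ?c = "\<lambda>B. if B = A then 1 else (-1::K)"
  have "(\<Sum>B\<in>{A, A'}. fscale (?c B) (Vg d (mon d B))) = fscale 1 (Vg d (mon d A)) + fscale (-1) (Vg d (mon d A'))"
    using ne by simp
  also have "\<dots> = 0" unfolding eq fscale_def by (simp add: fun_eq_iff)
  finally have sm0: "(\<Sum>B\<in>{A, A'}. fscale (?c B) (Vg d (mon d B))) = 0" .
  have "{A, A'} \<subseteq> Can d" using A by blast
  then have "?c A = 0" using INDEP[of "{A, A'}" d ?c A] sm0 by blast
  then show False by simp
qed

lemma indep_Bas: "FS.independent (Bas d)"
proof (rule FS.independent_if_scalars_zero)
  show "finite (Bas d)" using finite_Can by simp
  fix f y assume sm: "(\<Sum>y\<in>Bas d. fscale (f y) y) = 0" and y: "y \<in> Bas d"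
  then obtain A where A: "A \<in> Can d" "y = Vg d (mon d A)" by blast
  have "(\<Sum>B\<in>Can d. fscale (f (Vg d (mon d B))) (Vg d (mon d B))) = 0"
    using sm sum.reindex[OF inj_Bas, of "\<lambda>y. fscale (f y) y"] by simp
  then show "f y = 0" using INDEP[of "Can d" d "\<lambda>B. f (Vg d (mon d B))" A] A by simp
qed

lemma Bas_sub: "Bas d \<subseteq> CX E n s d"
proof
  fix y assume "y \<in> Bas d"
  then obtain A where A: "A \<in> Can d" "y = Vg d (mon d A)" by blast
  have "inS s (Poly_Mapping.single (mon d A) 1)" unfolding inS_def using mon_keys[OF A(1)] by simp
  moreover have "homog d (Poly_Mapping.single (mon d A) 1)" unfolding homog_def using mon_mdeg[OF A(1)] by simp
  ultimately have "Poly_Mapping.single (mon d A) 1 \<in> {f. inS s f \<and> homog d f}" by simp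
  then have "codeword E n s d (Poly_Mapping.single (mon d A) 1) \<in> codeword E n s d ` {f. inS s f \<and> homog d f}"
    by (rule imageI)
  then show "y \<in> CX E n s d" unfolding CX_def A(2) Vg_def .
qed

lemma CX_span: "CX E n s d \<subseteq> FS.span (Bas d)"
proof
  fix w assume "w \<in> CX E n s d"
  then have "w \<in> codeword E n s d ` {f. inS s f \<and> homog d f}" unfolding CX_def .
  then obtain f where f0: "f \<in> {f. inS s f \<and> homog d f}" "w = codeword E n s d f" by (rule imageE)
  then have f: "inS s f" "homog d f" "w = codeword E n s d f" by auto
  have mem: "Vg d \<gamma> \<in> Bas d" if g: "\<gamma> \<in> Poly_Mapping.keys f" for \<gamma>
  proof -
    have kg: "Poly_Mapping.keys \<gamma> \<subseteq> {1..s}" using f(1) g unfolding inS_def by auto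
    have mg: "mdeg \<gamma> = d" using f(2) g unfolding homog_def by auto
    let ?O = "oddset \<gamma>"
    have Os: "?O \<subseteq> {1..s}" using kg unfolding oddset_def by auto
    obtain A where A: "canI A" "rel ?O A" "card A \<le> card ?O" using can_exists[OF Os] by blast
    have co: "card ?O \<le> d" using oddset_card[of \<gamma>] mg by simp
    have "even (card ?O + card A)" using A(2) unfolding rel_def by simp
    moreover have "even (mdeg \<gamma>) \<longleftrightarrow> even (card ?O)" by (rule oddset_parity)
    ultimately have "even (d - card A)" using mg A(3) co by (simp add: even_add)
    then have AC: "A \<in> Can d" unfolding Can_def using A co by auto
    have ev: "\<forall>i. even (dg \<gamma> i + dg (mon d A) i)"
    proof
      fix i
      have "even (deg ?O i + deg A i)" using A(2) unfolding rel_def by blast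
      moreover have "even (dg \<gamma> i) \<longleftrightarrow> even (deg ?O i)" by (rule dg_parity)
      moreover have "even (if i \<in> E s then d - card A else 0)" using AC unfolding Can_def by auto
      ultimately show "even (dg \<gamma> i + dg (mon d A) i)" unfolding mon_dg[OF AC] by (simp add: even_add)
    qed
    have "Vg d \<gamma> = Vg d (mon d A)" using Vg_eq[OF kg mon_keys[OF AC]] mg mon_mdeg[OF AC] ev by simp
    then show ?thesis using AC by blast
  qed
  have sp: "fscale (Poly_Mapping.lookup f \<gamma>) (Vg d \<gamma>) \<in> FS.span (Bas d)" if g: "\<gamma> \<in> Poly_Mapping.keys f" for \<gamma>
    using FS.span_scale[OF FS.span_base[OF mem[OF g]]] .
  show "w \<in> FS.span (Bas d)" unfolding f(3) codeword_sum by (rule FS.span_sum) (rule sp)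
qed

lemma dim_CX: "FS.dim (CX E n s d) = card (Can d)"
proof -
  have "card (Bas d) = FS.dim (CX E n s d)" using FS.basis_card_eq_dim[OF Bas_sub CX_span indep_Bas] .
  moreover have "card (Bas d) = card (Can d)" using card_image[OF inj_Bas] .
  ultimately show ?thesis by simp
qed

end



context G begin

definition Sk :: "nat \<Rightarrow> nat set set" where "Sk k = {A. canI A \<and> card A = k}"

lemma finite_Sk: "finite (Sk k)"
proof -
  have "Sk k \<subseteq> Pow {1..s}" unfolding Sk_def canI_def by blast
  then show ?thesis by (rule finite_subset) simp
qed

lemma Jset_img: "Jset E s k = (\<lambda>A. E ` A) ` Sk k"
proof (intro equalityI subsetI)
  fix J assume J: "J \<in> Jset E s k"
  define A where "A = {i\<in>{1..s}. E i \<in> J}"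
  have JA: "J = E ` A" unfolding A_def by (rule Jset_sub[OF J])
  have As: "A \<subseteq> {1..s}" unfolding A_def by blast
  have "canI A \<and> card A = k" using Jset_iff[OF As] J JA by simp
  then have "A \<in> Sk k" unfolding Sk_def by blast
  then show "J \<in> (\<lambda>A. E ` A) ` Sk k" using JA by blast
next
  fix J assume "J \<in> (\<lambda>A. E ` A) ` Sk k"
  then obtain A where A: "A \<in> Sk k" "J = E ` A" by blast
  have As: "A \<subseteq> {1..s}" using A(1) unfolding Sk_def canI_def by blast
  show "J \<in> Jset E s k" using Jset_iff[OF As] A unfolding Sk_def by simp
qed

lemma inj_img: "inj_on (\<lambda>A. E ` A) (Sk k)"
proof (rule inj_onI)
  fix A B assume A: "A \<in> Sk k" and B: "B \<in> Sk k" and eq: "E ` A = E ` B"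
  have "A \<subseteq> {1..s}" "B \<subseteq> {1..s}" using A B unfolding Sk_def canI_def by blast+
  then show "A = B" using inj_on_image_eq_iff[OF injE] eq by blast
qed

lemma card_Jset: "card (Jset E s k) = card (Sk k)"
  unfolding Jset_img using card_image[OF inj_img] .

lemma Can_UN: "Can d = (\<Union>i\<in>{..d div 2}. Sk (d - 2 * i))"
proof (intro equalityI subsetI)
  fix A assume "A \<in> Can d"
  then have A: "canI A" "card A \<le> d" "even (d - card A)" unfolding Can_def by blast+
  define i where "i = (d - card A) div 2"
  have "card A = d - 2 * i" "i \<le> d div 2" unfolding i_def using A(2,3) by (auto elim!: evenE)
  then show "A \<in> (\<Union>i\<in>{..d div 2}. Sk (d - 2 * i))" unfolding Sk_def using A(1) by blast
next
  fix A assume "A \<in> (\<Union>i\<in>{..d div 2}. Sk (d - 2 * i))"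
  then obtain i where i: "i \<le> d div 2" "canI A" "card A = d - 2 * i" unfolding Sk_def by blast
  have "2 * i \<le> d" using i(1) by linarith
  then have "card A \<le> d" "even (d - card A)" using i(3) by auto
  then show "A \<in> Can d" unfolding Can_def using i(2) by blast
qed

lemma card_Can: "card (Can d) = (\<Sum>i\<le>d div 2. card (Sk (d - 2 * i)))"
  unfolding Can_UN
proof (rule card_UN_disjoint)
  show "finite {..d div 2}" by simp
  show "\<forall>i\<in>{..d div 2}. finite (Sk (d - 2 * i))" using finite_Sk by blast
  show "\<forall>i\<in>{..d div 2}. \<forall>j\<in>{..d div 2}. i \<noteq> j \<longrightarrow> Sk (d - 2 * i) \<inter> Sk (d - 2 * j) = {}"
  proof (intro ballI impI)
    fix i j assume i: "i \<in> {..d div 2}" and j: "j \<in> {..d div 2}" and ij: "i \<noteq> j"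
    have "2 * i \<le> d" "2 * j \<le> d" using i j by auto
    then have "d - 2 * i \<noteq> d - 2 * j" using ij by linarith
    then show "Sk (d - 2 * i) \<inter> Sk (d - 2 * j) = {}" unfolding Sk_def by auto
  qed
qed

lemma bij_main: "bij_betw (\<lambda>\<gamma>. E ` Poly_Mapping.keys \<gamma>) (Bset E n s d) (Jset E s d)"
  unfolding bij_betw_def
proof
  show "inj_on (\<lambda>\<gamma>. E ` Poly_Mapping.keys \<gamma>) (Bset E n s d)"
  proof (rule inj_onI)
    fix g h assume g: "g \<in> Bset E n s d" and h: "h \<in> Bset E n s d"
      and eq: "E ` Poly_Mapping.keys g = E ` Poly_Mapping.keys h"
    have kg: "Poly_Mapping.keys g \<subseteq> {1..s}" using g unfolding Bset_def by blast
    have kh: "Poly_Mapping.keys h \<subseteq> {1..s}" using h unfolding Bset_def by blast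
    have k: "Poly_Mapping.keys g = Poly_Mapping.keys h" using inj_on_image_eq_iff[OF injE kg kh] eq by simp
    have g1: "g = ind (Poly_Mapping.keys g)" using Bset_can[OF g] by blast
    have h1: "h = ind (Poly_Mapping.keys h)" using Bset_can[OF h] by blast
    show "g = h" using g1 h1 k by simp
  qed
  show "(\<lambda>\<gamma>. E ` Poly_Mapping.keys \<gamma>) ` Bset E n s d = Jset E s d"
  proof (intro equalityI subsetI)
    fix J assume "J \<in> (\<lambda>\<gamma>. E ` Poly_Mapping.keys \<gamma>) ` Bset E n s d"
    then obtain g where g: "g \<in> Bset E n s d" "J = E ` Poly_Mapping.keys g" by (rule imageE)
    have ks: "Poly_Mapping.keys g \<subseteq> {1..s}" using g(1) unfolding Bset_def by blast
    have c: "canI (Poly_Mapping.keys g) \<and> card (Poly_Mapping.keys g) = d" using Bset_can[OF g(1)] by blast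
    have "E ` Poly_Mapping.keys g \<in> Jset E s d" using Jset_iff[OF ks] c by (rule iffD2)
    then show "J \<in> Jset E s d" using g(2) by simp
  next
    fix J assume J: "J \<in> Jset E s d"
    then have "J \<in> (\<lambda>A. E ` A) ` Sk d" unfolding Jset_img .
    then obtain A where A: "A \<in> Sk d" "J = E ` A" by (rule imageE)
    have cA: "canI A" "card A = d" using A(1) unfolding Sk_def by blast+
    have fA: "finite A" using cA(1) finite_sub unfolding canI_def by blast
    have B: "ind A \<in> Bset E n s d" by (rule can_Bset[OF cA])
    have "J = E ` Poly_Mapping.keys (ind A)" using keys_ind[OF fA] A(2) by simp
    then show "J \<in> (\<lambda>\<gamma>. E ` Poly_Mapping.keys \<gamma>) ` Bset E n s d" using B by (rule image_eqI)
  qed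
qed

lemma dim_main: "vector_space.dim fscale (CX E n s d) = (\<Sum>i\<le>d div 2. card (Jset E s (d - 2 * i)))"
proof -
  have "vector_space.dim fscale (CX E n s d) = card (Can d)" by (rule dim_CX)
  also have "\<dots> = (\<Sum>i\<le>d div 2. card (Sk (d - 2 * i)))" by (rule card_Can)
  also have "\<dots> = (\<Sum>i\<le>d div 2. card (Jset E s (d - 2 * i)))" by (simp only: card_Jset)
  finally show ?thesis .
qed

end

theorem theorem2p4:
  fixes n s d :: nat and E :: "nat \<Rightarrow> nat set"
  assumes "s \<ge> 1"
    and "\<forall>k\<in>{1..s}. E k \<subseteq> {1..n} \<and> card (E k) = 2"
    and "inj_on E {1..s}"
  shows "bij_betw (\<lambda>\<gamma>. E ` Poly_Mapping.keys \<gamma>) (Bset E n s d) (Jset E s d) \<and>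
         vector_space.dim fscale (CX E n s d) = (\<Sum>i\<le>d div 2. card (Jset E s (d - 2 * i)))"
proof -
  interpret G n s E by (rule G.intro[OF assms])
  show ?thesis using bij_main dim_main by (rule conjI)
qed


end
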